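(* Let $\mathcal{V},\mathcal{U}$ be finite additive groups and $\mathcal{X},\mathcal{Y}$ nonempty sets. Let $\{V^n\}_{n\ge1}$ be a general source ($V^n$ a random variable on $\mathcal{V}^n$ with distribution $P_{V^n}$) and $\{W^m\}_{m\ge1}$ a general channel ($W^m(\cdot|\mathbf{x})$ a probability mass function on $\mathcal{Y}^m$ for each $\mathbf{x}\in\mathcal{X}^m$). Let $R\ge0$, $\epsilon\ge0$. Suppose that for each $n$ we are given positive integers $m=m_n$, $l=l_n$, a random linear code $F_n:\mathcal{V}^n\to\mathcal{U}^{l}$, and a map $q_n:\mathcal{V}^n\times\mathcal{U}^{l}\to\mathcal{X}^{m}$, and a sequence $\gamma_n$ with $\gamma_n>0$, $\gamma_n\to0$, $n\gamma_n\to\infty$, such that $\limsup_{n\to\infty}n/m_n\le R$ and $$\limsup_{n\to\infty}\Pr\Big\{\frac1n\ln\frac{W^m(Y^m|X^m)}{P_{Y^m}(Y^m)}\le\frac1n\ln\frac{1}{P_{V^n}(V^n)}+\frac1n\ln\beta'(F_n,q_n)(V^n,X^m)+\gamma_n\Big\}\le\epsilon,$$ where $(V^n,X^m,Y^m)$ has joint distribution $P_{V^n}(\mathbf{v})P_{X^m|V^n}(\mathbf{x}|\mathbf{v})W^m(\mathbf{y}|\mathbf{x})$ with $P_{X^m|V^n}(\mathbf{x}|\mathbf{v})=|q_n^{-1}(\mathbf{v},\mathbf{x})|/|\mathcal{U}|^{l}$, $q_n^{-1}(\mathbf{v},\mathbf{x})=\{\mathbf{u}\in\mathcal{U}^l:q_n(\mathbf{v},\mathbf{u})=\mathbf{x}\}$,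 $P_{Y^m}$ is the marginal of $Y^m$, and $$\beta'(F_n,q_n)(\mathbf{v},\mathbf{x})=\max_{P\in\mathcal{P}_n(\mathcal{V})\setminus\{P_{0^n}\},\ \mathbf{u}_1\in\mathcal{U}^l}\ \sum_{\mathbf{u}_2\in q_n^{-1}(\mathbf{v},\mathbf{x})}\frac{\alpha(F_n)(P,P_{\mathbf{u}_2-\mathbf{u}_1})}{|q_n^{-1}(\mathbf{v},\mathbf{x})|}.$$ Let $\epsilon_n$ denote the error probability of the system using the random encoder $\Phi_n(\mathbf{v})=q_n(\mathbf{v},\Sigma_l(F_n(\Sigma_n(\mathbf{v})))+\bar U^l)$ with optimal decoders, averaged over the random encoder. Then $\limsup_{n\to\infty}\epsilon_n\le\epsilon$; i.e. the system is $(R,\epsilon)$-transmissible.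
   Context: In the encoder, $\Sigma_n,\Sigma_l$ are uniformly distributed random permutations of the coordinates of $\mathcal{V}^n$ and $\mathcal{U}^l$, $\bar U^l$ is uniform on $\mathcal{U}^l$, and $F_n,\Sigma_n,\Sigma_l,\bar U^l$, the source and the channel are mutually independent. For each realization $\varphi_n$ of $\Phi_n$ the decoder $\psi_n:\mathcal{Y}^m\to\mathcal{V}^n$ minimizes $\Pr\{V^n\ne\psi_n(Y)\}$, $Y$ being the channel output of $W^m$ with input $\varphi_n(V^n)$; $\epsilon_n$ is the expectation over $\Phi_n$ of this minimum error probability. A random linear code $F:\mathcal{V}^n\to\mathcal{U}^l$ is a random variable taking values in the group homomorphisms $\mathcal{V}^n\to\mathcal{U}^l$. The type $P_{\mathbf{x}}$ of a length-$n$ sequence over a finite alphabet $\mathcal{A}$ is $P_{\mathbf{x}}(a)=N(a|\mathbf{x})/n$ ($N(a|\mathbf{x})$ the number of occurrences of $a$); $\mathcal{P}_n(\mathcal{A})$ is the set of types of sequences in $\mathcal{A}^n$; $P_{0^n}$ is the type of the all-zero sequence. For a map $f:\mathcal{V}^n\to\mathcal{U}^l$, $S(f)(P,Q)=|\{\mathbf{v}: P_{\mathbf{v}}=P,\ P_{f(\mathbf{v})}=Q\}|/|\mathcal{V}|^n$; for a random linear code $F$, $P\in\mathcal{P}_n(\mathcal{V})$, $Q\in\mathcal{P}_l(\mathcal{U})$, $\alpha(F)(P,Q)=E[S(F)(P,Q)]\big/\big(\binom{n}{nP}\binom{l}{lQ}|\mathcal{V}|^{-n}|\mathcal{U}|^{-l}\big)$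 with multinomial coefficients $\binom{n}{nP}=n!/\prod_a(nP(a))!$, $\binom{l}{lQ}=l!/\prod_b(lQ(b))!$. Logarithms are natural. *)

theory Defs
  imports "HOL-Probability.Probability" "HOL-Combinatorics.Permutations"
begin

definition seqs :: "nat \<Rightarrow> 'a list set" where
  "seqs n = {xs. length xs = n}"

definition ladd :: "'a::plus list \<Rightarrow> 'a list \<Rightarrow> 'a list" where
  "ladd xs ys = map2 (+) xs ys"

definition lsub :: "'a::minus list \<Rightarrow> 'a list \<Rightarrow> 'a list" where
  "lsub xs ys = map2 (-) xs ys"

definition unif_seq :: "nat \<Rightarrow> ('a::finite) list pmf" where
  "unif_seq l = pmf_of_set (seqs l)"

definition unif_perm :: "nat \<Rightarrow> (nat \<Rightarrow> nat) pmf" where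
  "unif_perm n = pmf_of_set {\<sigma>. \<sigma> permutes {..<n}}"

text \<open>Group homomorphisms \<open>V^n \<rightarrow> U^l\<close> (values outside \<open>V^n\<close> are irrelevant).\<close>
definition is_linear_map :: "nat \<Rightarrow> nat \<Rightarrow> ('v::ab_group_add list \<Rightarrow> 'u::ab_group_add list) \<Rightarrow> bool" where
  "is_linear_map n l f \<longleftrightarrow>
     (\<forall>v\<in>seqs n. f v \<in> seqs l) \<and>
     (\<forall>a\<in>seqs n. \<forall>b\<in>seqs n. f (ladd a b) = ladd (f a) (f b))"

definition random_linear_code :: "nat \<Rightarrow> nat \<Rightarrow> ('v::ab_group_add list \<Rightarrow> 'u::ab_group_add list) pmf \<Rightarrow> bool" where
  "random_linear_code n l F \<longleftrightarrow> (\<forall>f\<in>set_pmf F. is_linear_map n l f)"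

definition type_of :: "'a list \<Rightarrow> 'a \<Rightarrow> real" where
  "type_of xs = (\<lambda>a. real (count_list xs a) / real (length xs))"

definition types :: "nat \<Rightarrow> ('a \<Rightarrow> real) set" where
  "types n = type_of ` seqs n"

definition multinom :: "nat \<Rightarrow> ('a::finite \<Rightarrow> real) \<Rightarrow> real" where
  "multinom n P = fact n / (\<Prod>a\<in>UNIV. fact (nat \<lfloor>real n * P a\<rfloor>))"

definition S_count :: "nat \<Rightarrow> ('v::finite list \<Rightarrow> 'u list) \<Rightarrow> ('v \<Rightarrow> real) \<Rightarrow> ('u \<Rightarrow> real) \<Rightarrow> real" where
  "S_count n f P Q =
     real (card {v\<in>seqs n. type_of v = P \<and> type_of (f v) = Q}) / real (CARD('v)) ^ n"

definition alpha :: "nat \<Rightarrow> nat \<Rightarrow> ('v::finite list \<Rightarrow> 'u::finite list) pmf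
                      \<Rightarrow> ('v \<Rightarrow> real) \<Rightarrow> ('u \<Rightarrow> real) \<Rightarrow> real" where
  "alpha n l F P Q =
     measure_pmf.expectation F (\<lambda>f. S_count n f P Q) /
     (multinom n P * multinom l Q * inverse (real (CARD('v)) ^ n) * inverse (real (CARD('u)) ^ l))"

definition q_inv :: "nat \<Rightarrow> ('v list \<Rightarrow> 'u list \<Rightarrow> 'x list) \<Rightarrow> 'v list \<Rightarrow> 'x list \<Rightarrow> 'u list set" where
  "q_inv l q v x = {u\<in>seqs l. q v u = x}"

definition beta' :: "nat \<Rightarrow> nat \<Rightarrow> ('v::{finite,ab_group_add} list \<Rightarrow> 'u::{finite,ab_group_add} list) pmf
                      \<Rightarrow> ('v list \<Rightarrow> 'u list \<Rightarrow> 'x list) \<Rightarrow> 'v list \<Rightarrow> 'x list \<Rightarrow> real" where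
  "beta' n l F q v x =
     Max ((\<lambda>(P, u1). \<Sum>u2\<in>q_inv l q v x.
              alpha n l F P (type_of (lsub u2 u1)) / real (card (q_inv l q v x)))
          ` ((types n - {type_of (replicate n 0)}) \<times> seqs l))"

text \<open>Joint distribution of \<open>(V^n, X^m, Y^m)\<close> with \<open>P_{X|V}(x|v) = |q^{-1}(v,x)|/|U|^l\<close>.\<close>
definition joint :: "'v list pmf \<Rightarrow> nat \<Rightarrow> ('v list \<Rightarrow> 'u::finite list \<Rightarrow> 'x list)
                      \<Rightarrow> ('x list \<Rightarrow> 'y list pmf) \<Rightarrow> ('v list \<times> 'x list \<times> 'y list) pmf" where
  "joint PV l q Wm =
     do { v \<leftarrow> PV; x \<leftarrow> map_pmf (q v) (unif_seq l); y \<leftarrow> Wm x; return_pmf (v, x, y) }"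

definition random_encoder :: "nat \<Rightarrow> nat \<Rightarrow> ('v list \<Rightarrow> 'u::{finite,ab_group_add} list) pmf
                      \<Rightarrow> ('v list \<Rightarrow> 'u list \<Rightarrow> 'x list) \<Rightarrow> ('v list \<Rightarrow> 'x list) pmf" where
  "random_encoder n l F q =
     do { f \<leftarrow> F; \<sigma>n \<leftarrow> unif_perm n; \<sigma>l \<leftarrow> unif_perm l; ub \<leftarrow> unif_seq l;
          return_pmf (\<lambda>v. q v (ladd (permute_list \<sigma>l (f (permute_list \<sigma>n v))) ub)) }"

definition opt_error :: "nat \<Rightarrow> 'v list pmf \<Rightarrow> ('x list \<Rightarrow> 'y list pmf) \<Rightarrow> ('v list \<Rightarrow> 'x list) \<Rightarrow> real" where
  "opt_error n PV Wm \<phi> =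
     (INF \<psi>\<in>{\<psi>. \<forall>y. \<psi> y \<in> seqs n}.
        measure_pmf.prob (do { v \<leftarrow> PV; y \<leftarrow> Wm (\<phi> v); return_pmf (v, y) })
                         {(v, y). v \<noteq> \<psi> y})"

definition avg_error :: "nat \<Rightarrow> nat \<Rightarrow> 'v list pmf \<Rightarrow> ('x list \<Rightarrow> 'y list pmf)
                      \<Rightarrow> ('v list \<Rightarrow> 'u::{finite,ab_group_add} list) pmf \<Rightarrow> ('v list \<Rightarrow> 'u list \<Rightarrow> 'x list) \<Rightarrow> real" where
  "avg_error n l PV Wm F q =
     measure_pmf.expectation (random_encoder n l F q) (opt_error n PV Wm)"

end

theory Submission
  imports Defs "HOL-Combinatorics.Multiset_Permutations"
begin

lemma pmf_unif_from_const:
  assumes "finite C" "set_pmf D \<subseteq> C" "\<And>y. y \<in> C \<Longrightarrow> pmf D y = pmf D a" "a \<in> C"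
  shows "D = pmf_of_set C"
proof -
  have "1 = (\<Sum>y\<in>C. pmf D y)"
    using assms(1,2) by (metis sum_pmf_eq_1)
  also have "\<dots> = real (card C) * pmf D a" using assms(3) by simp
  finally have a: "pmf D a = 1 / real (card C)"
    by (metis mult.commute nonzero_mult_div_cancel_left div_by_1 divide_divide_eq_right mult_zero_left zero_neq_one)
  have ne: "C \<noteq> {}" using assms(4) by auto
  show ?thesis
  proof (rule pmf_eqI)
    fix i show "pmf D i = pmf (pmf_of_set C) i"
    proof (cases "i \<in> C")
      case True then show ?thesis using a assms(3) ne assms(1) by simp
    next
      case False then have "i \<notin> set_pmf D" using assms(2) by auto
      then show ?thesis using False ne assms(1) by (simp add: set_pmf_iff)
    qed
  qed
qed

lemma map_perm_unif:
  "map_pmf (\<lambda>\<sigma>. permute_list \<sigma> xs) (unif_perm (length xs)) = pmf_of_set {ys. mset ys = mset xs}"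
proof -
  define n where "n = length xs"
  define P where "P = {\<sigma>. \<sigma> permutes {..<n}}"
  define g where "g = (\<lambda>\<sigma>. permute_list \<sigma> xs)"
  have finP: "finite P" unfolding P_def by (rule finite_permutations) simp
  have neP: "P \<noteq> {}" unfolding P_def using permutes_id by blast
  have finC: "finite {ys. mset ys = mset xs}"
    using finite_permutations_of_multiset[of "mset xs"] unfolding permutations_of_multiset_def .
  have pm: "pmf (map_pmf g (pmf_of_set P)) y = real (card (P \<inter> g -` {y})) / real (card P)" for y
    using finP neP by (simp add: pmf_map measure_pmf_of_set)
  have eqc: "card (P \<inter> g -` {y}) = card (P \<inter> g -` {xs})" if yy: "mset y = mset xs" for y
  proof -
    obtain \<tau> where t: "\<tau> permutes {..<length xs}" "permute_list \<tau> xs = y"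
      using mset_eq_permutation[OF yy] by blast
    have ti: "inv \<tau> permutes {..<length xs}" using t(1) by (rule permutes_inv)
    show ?thesis
    proof (rule bij_betw_same_card[of "\<lambda>\<sigma>. \<sigma> \<circ> inv \<tau>"], rule bij_betw_byWitness[where f'="\<lambda>\<sigma>. \<sigma> \<circ> \<tau>"])
      show "\<forall>a\<in>P \<inter> g -` {y}. a \<circ> inv \<tau> \<circ> \<tau> = a"
        using permutes_inv_o(2)[OF t(1)] by (auto simp: o_assoc[symmetric])
      show "\<forall>a\<in>P \<inter> g -` {xs}. a \<circ> \<tau> \<circ> inv \<tau> = a"
        using permutes_inv_o(1)[OF t(1)] by (auto simp: o_assoc[symmetric])
      show "(\<lambda>\<sigma>. \<sigma> \<circ> inv \<tau>) ` (P \<inter> g -` {y}) \<subseteq> P \<inter> g -` {xs}"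
      proof
        fix s assume "s \<in> (\<lambda>\<sigma>. \<sigma> \<circ> inv \<tau>) ` (P \<inter> g -` {y})"
        then obtain \<sigma> where s: "s = \<sigma> \<circ> inv \<tau>" "\<sigma> \<in> P" "g \<sigma> = y" by auto
        have "s \<in> P" using s(1,2) ti unfolding P_def n_def by (auto intro: permutes_compose)
        moreover have "g s = xs"
        proof -
          have "g s = permute_list (inv \<tau>) (permute_list \<sigma> xs)"
            unfolding g_def s(1) using ti by (rule permute_list_compose)
          also have "\<dots> = permute_list (inv \<tau>) (permute_list \<tau> xs)" using s(3) t(2) unfolding g_def by simp
          also have "\<dots> = permute_list (\<tau> \<circ> inv \<tau>) xs" using ti by (rule permute_list_compose[symmetric])
          also have "\<dots> = xs" using permutes_inv_o(1)[OF t(1)] by simp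
          finally show ?thesis .
        qed
        ultimately show "s \<in> P \<inter> g -` {xs}" by auto
      qed
      show "(\<lambda>\<sigma>. \<sigma> \<circ> \<tau>) ` (P \<inter> g -` {xs}) \<subseteq> P \<inter> g -` {y}"
      proof
        fix s assume "s \<in> (\<lambda>\<sigma>. \<sigma> \<circ> \<tau>) ` (P \<inter> g -` {xs})"
        then obtain \<sigma> where s: "s = \<sigma> \<circ> \<tau>" "\<sigma> \<in> P" "g \<sigma> = xs" by auto
        have "s \<in> P" using s(1,2) t unfolding P_def n_def by (auto intro: permutes_compose)
        moreover have "g s = y"
          using s t unfolding g_def by (metis permute_list_compose)
        ultimately show "s \<in> P \<inter> g -` {y}" by auto
      qed
    qed
  qed
  have supp: "set_pmf (map_pmf g (pmf_of_set P)) \<subseteq> {ys. mset ys = mset xs}"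
  proof
    fix y assume "y \<in> set_pmf (map_pmf g (pmf_of_set P))"
    then obtain \<sigma> where "\<sigma> \<in> P" "y = g \<sigma>" using finP neP by auto
    then show "y \<in> {ys. mset ys = mset xs}" unfolding g_def P_def n_def
      using mset_permute_list by blast
  qed
  have "map_pmf g (pmf_of_set P) = pmf_of_set {ys. mset ys = mset xs}"
  proof (rule pmf_unif_from_const[OF finC supp, of xs])
    fix y assume "y \<in> {ys. mset ys = mset xs}"
    then have my: "mset y = mset xs" by simp
    then show "pmf (map_pmf g (pmf_of_set P)) y = pmf (map_pmf g (pmf_of_set P)) xs"
      by (simp only: pm eqc[OF my])
  qed simp
  then show ?thesis unfolding g_def P_def n_def unif_perm_def .
qed

lemma finite_seqs[simp]: "finite (seqs n :: ('a::finite) list set)"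
  unfolding seqs_def using finite_lists_length_eq[of "UNIV::'a set" n] by simp

lemma card_seqs: "card (seqs n :: ('a::finite) list set) = CARD('a) ^ n"
  unfolding seqs_def using card_lists_length_eq[of "UNIV::'a set" n] by simp

lemma seqs_ne[simp]: "seqs n \<noteq> {}"
  unfolding seqs_def by (auto intro: exI[of _ "replicate n undefined"])

lemma length_ladd[simp]: "length (ladd a b) = min (length a) (length b)"
  by (simp add: ladd_def)
lemma length_lsub[simp]: "length (lsub a b) = min (length a) (length b)"
  by (simp add: lsub_def)
lemma nth_ladd: "i < length a \<Longrightarrow> i < length b \<Longrightarrow> ladd a b ! i = a ! i + b ! i"
  by (simp add: ladd_def)
lemma nth_lsub: "i < length a \<Longrightarrow> i < length b \<Longrightarrow> lsub a b ! i = a ! i - b ! i"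
  by (simp add: lsub_def)

lemma ladd_lsub_cancel:
  fixes a b :: "'a::ab_group_add list"
  shows "length a = length b \<Longrightarrow> ladd a (lsub b a) = b"
  by (rule nth_equalityI) (auto simp: nth_ladd nth_lsub)

lemma lsub_ladd_cancel:
  fixes a c :: "'a::ab_group_add list"
  shows "length a = length c \<Longrightarrow> lsub (ladd a c) a = c"
  by (rule nth_equalityI) (auto simp: nth_ladd nth_lsub)

lemma lsub_ladd_ladd:
  fixes a b c :: "'a::ab_group_add list"
  shows "length a = length c \<Longrightarrow> length b = length c \<Longrightarrow> lsub (ladd b c) (ladd a c) = lsub b a"
  by (rule nth_equalityI) (auto simp: nth_ladd nth_lsub)

lemma ladd_eq_iff:
  fixes a c u :: "'a::ab_group_add list"
  shows "length a = length c \<Longrightarrow> length u = length c \<Longrightarrow> (ladd a c = u) = (c = lsub u a)"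
proof -
  assume h: "length a = length c" "length u = length c"
  show "(ladd a c = u) = (c = lsub u a)"
  proof
    assume "ladd a c = u"
    then have "lsub u a = lsub (ladd a c) a" by simp
    also have "\<dots> = c" using h by (simp add: lsub_ladd_cancel)
    finally show "c = lsub u a" by (rule sym)
  next
    assume cc: "c = lsub u a"
    have "length a = length u" using h by simp
    then show "ladd a c = u" unfolding cc by (rule ladd_lsub_cancel)
  qed
qed

lemma lsub_eq_zero:
  fixes a b :: "'a::ab_group_add list"
  assumes "length a = length b" "lsub a b = replicate (length a) 0"
  shows "a = b"
proof (rule nth_equalityI)
  show "length a = length b" by fact
  fix i assume i: "i < length a"
  have "lsub a b ! i = 0" using assms(2) i by simp
  then show "a ! i = b ! i" using i assms(1) by (simp add: nth_lsub)
qed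

lemma permute_lsub:
  fixes a b :: "'a::ab_group_add list"
  assumes "\<sigma> permutes {..<length a}" "length a = length b"
  shows "permute_list \<sigma> (lsub a b) = lsub (permute_list \<sigma> a) (permute_list \<sigma> b)"
  using assms permutes_in_image[OF assms(1)]
  by (intro nth_equalityI) (auto simp: nth_lsub permute_list_nth)

lemma linear_lsub:
  fixes f :: "'v::ab_group_add list \<Rightarrow> 'u::ab_group_add list"
  assumes "is_linear_map n l f" "v \<in> seqs n" "v' \<in> seqs n"
  shows "f (lsub v' v) = lsub (f v') (f v)"
proof -
  have w: "lsub v' v \<in> seqs n" using assms(2,3) by (simp add: seqs_def)
  have "f v' = f (ladd v (lsub v' v))" using assms(2,3) by (simp add: seqs_def ladd_lsub_cancel)
  also have "\<dots> = ladd (f v) (f (lsub v' v))" using assms w unfolding is_linear_map_def by blast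
  finally have "lsub (f v') (f v) = lsub (ladd (f v) (f (lsub v' v))) (f v)" by simp
  also have "\<dots> = f (lsub v' v)" using assms w unfolding is_linear_map_def seqs_def
    by (intro lsub_ladd_cancel) auto
  finally show ?thesis by simp
qed

lemma type_eq_mset:
  assumes "length a = length b"
  shows "(type_of a = type_of b) = (mset a = mset b)"
proof (cases "length a = 0")
  case True then show ?thesis using assms by simp
next
  case False
  have "(type_of a = type_of b) = (\<forall>x. real (count_list a x) / real (length a) = real (count_list b x) / real (length a))"
    using assms by (simp add: type_of_def fun_eq_iff)
  also have "\<dots> = (\<forall>x. count_list a x = count_list b x)" using False by simp
  also have "\<dots> = (mset a = mset b)" by (simp add: multiset_eq_iff count_mset)
  finally show ?thesis .
qed

lemma type_zero:
  fixes a :: "'a::zero list"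
  assumes "length a = n" "n > 0" "type_of a = type_of (replicate n 0)"
  shows "a = replicate n 0"
proof -
  have "mset a = mset (replicate n 0)" using assms type_eq_mset[of a "replicate n 0"] by simp
  then have "set a = set (replicate n (0::'a))" by (rule mset_eq_setD)
  then have "set a = {0}" using assms(2) by simp
  then show ?thesis using assms(1) by (intro replicate_eqI) auto
qed

lemma multinom_card:
  fixes w :: "'a::finite list"
  assumes "length w = n" "n > 0"
  shows "multinom n (type_of w) = real (card {ys. mset ys = mset w})"
proof -
  have c: "card {ys. mset ys = mset w} = fact n div (\<Prod>x\<in>set w. fact (count_list w x))"
    "(\<Prod>x\<in>set w. fact (count_list w x) :: nat) dvd fact n"
  proof -
    have e: "{ys. mset ys = mset w} = permutations_of_multiset (mset w)"
      by (simp add: permutations_of_multiset_def)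
    have e2: "(\<Prod>x\<in>set_mset (mset w). fact (count (mset w) x)) = (\<Prod>x\<in>set w. fact (count_list w x) :: nat)"
      by (simp only: set_mset_mset count_mset)
    show "card {ys. mset ys = mset w} = fact n div (\<Prod>x\<in>set w. fact (count_list w x))"
      "(\<Prod>x\<in>set w. fact (count_list w x) :: nat) dvd fact n"
      using card_permutations_of_multiset[of "mset w"] unfolding e e2 size_mset assms(1) by simp_all
  qed
  have fl: "nat \<lfloor>real n * type_of w a\<rfloor> = count_list w a" for a
    using assms unfolding type_of_def by simp
  have p: "(\<Prod>a\<in>UNIV. fact (count_list w a) :: real) = (\<Prod>a\<in>set w. fact (count_list w a))"
    by (rule prod.mono_neutral_right) (auto simp: count_list_0_iff)
  have "multinom n (type_of w) = fact n / (\<Prod>a\<in>set w. fact (count_list w a))"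
    unfolding multinom_def fl p ..
  also have "\<dots> = real (card {ys. mset ys = mset w})"
    unfolding c(1) using c(2) by (simp add: real_of_nat_div of_nat_prod)
  finally show ?thesis .
qed

lemma exp_cong_pmf:
  fixes f g :: "'a \<Rightarrow> real"
  shows "(\<And>x. x \<in> set_pmf p \<Longrightarrow> f x = g x) \<Longrightarrow> measure_pmf.expectation p f = measure_pmf.expectation p g"
  by (rule integral_cong_AE) (auto intro: AE_pmfI)

lemma sum_if_const:
  "finite A \<Longrightarrow> (\<Sum>z\<in>A. if P z then c else 0) = real (card {z\<in>A. P z}) * (c::real)"
  by (simp add: sum.inter_filter[symmetric])

lemma finite_mset_class: "finite {ys. mset ys = mset (xs::'a list)}"
  using finite_permutations_of_multiset[of "mset xs"] unfolding permutations_of_multiset_def .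

lemma mset_class_ne: "{ys. mset ys = mset (xs::'a list)} \<noteq> {}" by auto

lemma exp_perm:
  fixes k :: "'a list \<Rightarrow> real"
  shows "measure_pmf.expectation (unif_perm (length y)) (\<lambda>\<sigma>. k (permute_list \<sigma> y))
       = (\<Sum>z\<in>{ys. mset ys = mset y}. k z) / real (card {ys. mset ys = mset y})"
proof -
  have "measure_pmf.expectation (unif_perm (length y)) (\<lambda>\<sigma>. k (permute_list \<sigma> y))
     = measure_pmf.expectation (map_pmf (\<lambda>\<sigma>. permute_list \<sigma> y) (unif_perm (length y))) k"
    by simp
  also have "\<dots> = measure_pmf.expectation (pmf_of_set {ys. mset ys = mset y}) k"
    unfolding map_perm_unif ..
  also have "\<dots> = (\<Sum>z\<in>{ys. mset ys = mset y}. k z) / real (card {ys. mset ys = mset y})"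
    by (rule integral_pmf_of_set[OF mset_class_ne finite_mset_class])
  finally show ?thesis .
qed

lemma perm_prob:
  fixes f :: "'v::finite list \<Rightarrow> 'u::finite list"
  assumes w: "length w = n" "n > 0" and d: "length d = l" "l > 0" and f: "\<forall>v\<in>seqs n. f v \<in> seqs l"
  shows "measure_pmf.expectation (unif_perm n) (\<lambda>\<sigma>n. measure_pmf.expectation (unif_perm l)
            (\<lambda>\<sigma>l. indicator {d} (permute_list \<sigma>l (f (permute_list \<sigma>n w)))))
       = real (card {w'\<in>seqs n. type_of w' = type_of w \<and> type_of (f w') = type_of d})
           / (multinom n (type_of w) * multinom l (type_of d))"
proof -
  define Cd where "Cd = {ys. mset ys = mset d}"
  define Cw where "Cw = {ys. mset ys = mset w}"
  define h where "h = (\<lambda>y::'u list. if mset y = mset d then 1 / real (card Cd) else 0)"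
  have inner: "measure_pmf.expectation (unif_perm l) (\<lambda>\<sigma>l. indicator {d} (permute_list \<sigma>l y)) = h y"
    if y: "length y = l" for y
  proof -
    have "measure_pmf.expectation (unif_perm l) (\<lambda>\<sigma>l. indicator {d} (permute_list \<sigma>l y) :: real)
       = (\<Sum>z\<in>{ys. mset ys = mset y}. indicator {d} z) / real (card {ys. mset ys = mset y})"
      using exp_perm[where k="indicator {d}" and y=y] y by simp
    also have "\<dots> = h y"
    proof (cases "mset y = mset d")
      case True
      then have "{ys. mset ys = mset y} = Cd" unfolding Cd_def by simp
      moreover have "d \<in> Cd" unfolding Cd_def by simp
      moreover have "(\<Sum>z\<in>Cd. indicator {d} z :: real) = 1"
        using \<open>d \<in> Cd\<close> unfolding indicator_def Cd_def by (simp add: finite_mset_class)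
      ultimately show ?thesis using True unfolding h_def by simp
    next
      case False
      then have "d \<notin> {ys. mset ys = mset y}" by auto
      then have "(\<Sum>z\<in>{ys. mset ys = mset y}. indicator {d} z :: real) = 0"
        by (intro sum.neutral) (auto simp: indicator_def)
      then show ?thesis using False unfolding h_def by simp
    qed
    finally show ?thesis .
  qed
  have e1: "measure_pmf.expectation (unif_perm n) (\<lambda>\<sigma>n. measure_pmf.expectation (unif_perm l)
            (\<lambda>\<sigma>l. indicator {d} (permute_list \<sigma>l (f (permute_list \<sigma>n w)))))
      = measure_pmf.expectation (unif_perm n) (\<lambda>\<sigma>n. h (f (permute_list \<sigma>n w)))"
  proof (rule exp_cong_pmf)
    fix \<sigma> assume "\<sigma> \<in> set_pmf (unif_perm n)"
    then have "\<sigma> permutes {..<n}" unfolding unif_perm_def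
      by (subst (asm) set_pmf_of_set) (auto intro: finite_permutations permutes_id)
    then have "permute_list \<sigma> w \<in> seqs n" using w by (simp add: seqs_def)
    then have "length (f (permute_list \<sigma> w)) = l" using f by (simp add: seqs_def)
    then show "measure_pmf.expectation (unif_perm l) (\<lambda>\<sigma>l. indicator {d} (permute_list \<sigma>l (f (permute_list \<sigma> w))))
          = h (f (permute_list \<sigma> w))" by (rule inner)
  qed
  have e2: "measure_pmf.expectation (unif_perm n) (\<lambda>\<sigma>n. h (f (permute_list \<sigma>n w))) = (\<Sum>z\<in>Cw. h (f z)) / real (card Cw)"
    unfolding Cw_def using exp_perm[where y=w and k="\<lambda>z. h (f z)"] w(1) by simp
  have e3: "(\<Sum>z\<in>Cw. h (f z)) = real (card {z\<in>Cw. mset (f z) = mset d}) / real (card Cd)"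
  proof -
    have fC: "finite Cw" unfolding Cw_def by (rule finite_mset_class)
    have "(\<Sum>z\<in>Cw. h (f z)) = real (card {z\<in>Cw. mset (f z) = mset d}) * (1 / real (card Cd))"
      unfolding h_def by (rule sum_if_const[OF fC])
    then show ?thesis by simp
  qed
  have e4: "{z\<in>Cw. mset (f z) = mset d} = {w'\<in>seqs n. type_of w' = type_of w \<and> type_of (f w') = type_of d}"
  proof -
    have "z \<in> Cw \<and> mset (f z) = mset d \<longleftrightarrow> z \<in> seqs n \<and> type_of z = type_of w \<and> type_of (f z) = type_of d" for z
    proof
      assume a: "z \<in> Cw \<and> mset (f z) = mset d"
      then have m1: "mset z = mset w" and m2: "mset (f z) = mset d" unfolding Cw_def by auto
      have zl: "length z = n" using mset_eq_length[OF m1] w(1) by simp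
      then have zs: "z \<in> seqs n" by (simp add: seqs_def)
      then have "length (f z) = l" using f by (simp add: seqs_def)
      then have "type_of (f z) = type_of d" using type_eq_mset[of "f z" d] m2 d(1) by simp
      moreover have "type_of z = type_of w" using type_eq_mset[of z w] m1 zl w(1) by simp
      ultimately show "z \<in> seqs n \<and> type_of z = type_of w \<and> type_of (f z) = type_of d" using zs by simp
    next
      assume a: "z \<in> seqs n \<and> type_of z = type_of w \<and> type_of (f z) = type_of d"
      then have zl: "length z = n" by (simp add: seqs_def)
      have "length (f z) = l" using f a by (simp add: seqs_def)
      then have "mset (f z) = mset d" using type_eq_mset[of "f z" d] a d(1) by simp
      moreover have "mset z = mset w" using type_eq_mset[of z w] a zl w(1) by simp
      ultimately show "z \<in> Cw \<and> mset (f z) = mset d" unfolding Cw_def by simp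
    qed
    then show ?thesis by blast
  qed
  have e5: "real (card Cw) = multinom n (type_of w)" unfolding Cw_def using multinom_card[OF w] ..
  have e6: "real (card Cd) = multinom l (type_of d)" unfolding Cd_def using multinom_card[OF d] ..
  show ?thesis unfolding e1 e2 e3 e4 e5 e6 by (simp add: divide_divide_eq_left mult.commute)
qed

lemma integrable_bdd:
  fixes g :: "'a \<Rightarrow> real"
  shows "(\<And>x. \<bar>g x\<bar> \<le> B) \<Longrightarrow> integrable (measure_pmf p) g"
  by (rule measure_pmf.integrable_const_bound[where B=B]) auto

lemma exp_abs_bdd:
  fixes g :: "'a \<Rightarrow> real"
  assumes "\<And>x. \<bar>g x\<bar> \<le> B"
  shows "\<bar>measure_pmf.expectation p g\<bar> \<le> B"
proof -
  have i: "integrable (measure_pmf p) g" using assms by (rule integrable_bdd)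
  have "measure_pmf.expectation p g \<le> B"
    using assms by (intro measure_pmf.integral_le_const[OF i]) (auto intro!: AE_pmfI simp: abs_le_iff)
  moreover have "-B \<le> measure_pmf.expectation p g"
    using assms by (intro measure_pmf.integral_ge_const[OF i]) (auto intro!: AE_pmfI simp: abs_le_iff minus_le_iff)
  ultimately show ?thesis by simp
qed

lemma integral_bind_pmf_bdd:
  fixes f :: "'a \<Rightarrow> real"
  assumes "\<And>x. \<bar>f x\<bar> \<le> B"
  shows "measure_pmf.expectation (bind_pmf M N) f = measure_pmf.expectation M (\<lambda>x. measure_pmf.expectation (N x) f)"
  unfolding measure_pmf_bind
  apply (rule integral_bind[where K="count_space UNIV" and B=B and B'=1])
  using measurable_measure_pmf[of N] assms by (auto simp: prob_space.emeasure_space_1 measure_pmf.prob_space_axioms intro: measure_pmf.finite_measure)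

definition Tp :: "nat \<Rightarrow> nat \<Rightarrow> ('v list \<Rightarrow> 'u::finite list) pmf
    \<Rightarrow> (('v list \<Rightarrow> 'u list) \<times> (nat \<Rightarrow> nat) \<times> (nat \<Rightarrow> nat) \<times> 'u list) pmf" where
  "Tp n l F = do { f \<leftarrow> F; \<sigma>n \<leftarrow> unif_perm n; \<sigma>l \<leftarrow> unif_perm l; ub \<leftarrow> unif_seq l;
          return_pmf (f, \<sigma>n, \<sigma>l, ub) }"

definition Gt :: "(('v list \<Rightarrow> 'u::plus list) \<times> (nat \<Rightarrow> nat) \<times> (nat \<Rightarrow> nat) \<times> 'u list) \<Rightarrow> 'v list \<Rightarrow> 'u list" where
  "Gt t v = (case t of (f, \<sigma>n, \<sigma>l, ub) \<Rightarrow> ladd (permute_list \<sigma>l (f (permute_list \<sigma>n v))) ub)"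

lemma enc_map: "random_encoder n l F q = map_pmf (\<lambda>t v. q v (Gt t v)) (Tp n l F)"
  by (simp add: random_encoder_def Tp_def map_bind_pmf Gt_def)

lemma set_unif_perm: "\<sigma> \<in> set_pmf (unif_perm n) \<longleftrightarrow> \<sigma> permutes {..<n}"
  unfolding unif_perm_def by (subst set_pmf_of_set) (auto intro: finite_permutations permutes_id)

lemma set_unif_seq: "set_pmf (unif_seq l :: ('a::finite) list pmf) = seqs l"
  unfolding unif_seq_def by simp

lemma exp_Tp:
  fixes k :: "_ \<Rightarrow> real"
  assumes "\<And>t. \<bar>k t\<bar> \<le> B"
  shows "measure_pmf.expectation (Tp n l F) k =
    measure_pmf.expectation F (\<lambda>f. measure_pmf.expectation (unif_perm n) (\<lambda>\<sigma>n.
      measure_pmf.expectation (unif_perm l) (\<lambda>\<sigma>l. measure_pmf.expectation (unif_seq l) (\<lambda>ub.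
        k (f, \<sigma>n, \<sigma>l, ub)))))"
proof -
  have b1: "\<bar>measure_pmf.expectation (unif_seq l) (\<lambda>ub. k (f, \<sigma>n, \<sigma>l, ub))\<bar> \<le> B" for f \<sigma>n \<sigma>l
    by (rule exp_abs_bdd) (rule assms)
  have b2: "\<bar>measure_pmf.expectation (unif_perm l) (\<lambda>\<sigma>l. measure_pmf.expectation (unif_seq l) (\<lambda>ub. k (f, \<sigma>n, \<sigma>l, ub)))\<bar> \<le> B" for f \<sigma>n
    by (rule exp_abs_bdd) (rule b1)
  show ?thesis
    unfolding Tp_def
    apply (subst integral_bind_pmf_bdd[where B=B], rule assms)
    apply (rule exp_cong_pmf)
    apply (subst integral_bind_pmf_bdd[where B=B], rule assms)
    apply (rule exp_cong_pmf)
    apply (subst integral_bind_pmf_bdd[where B=B], rule assms)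
    apply (rule exp_cong_pmf)
    apply (subst integral_bind_pmf_bdd[where B=B], rule assms)
    apply (rule exp_cong_pmf)
    apply simp
    done
qed

lemma inj_ladd: "inj_on (ladd (a::'a::ab_group_add list)) (seqs (length a))"
proof (rule inj_onI)
  fix x y assume h: "x \<in> seqs (length a)" "y \<in> seqs (length a)" "ladd a x = ladd a y"
  have lx: "length a = length x" and ly: "length a = length y" using h(1,2) by (simp_all add: seqs_def)
  have "x = lsub (ladd a x) a" using lsub_ladd_cancel[OF lx] by (rule sym)
  also have "\<dots> = lsub (ladd a y) a" using h(3) by (rule arg_cong)
  also have "\<dots> = y" using lsub_ladd_cancel[OF ly] .
  finally show "x = y" .
qed

lemma image_ladd: "ladd (a::'a::ab_group_add list) ` seqs (length a) = seqs (length a)"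
proof
  show "ladd a ` seqs (length a) \<subseteq> seqs (length a)" by (auto simp: seqs_def)
  show "seqs (length a) \<subseteq> ladd a ` seqs (length a)"
  proof
    fix u :: "'a list" assume u: "u \<in> seqs (length a)"
    then have lu: "length a = length u" by (simp add: seqs_def)
    have "u = ladd a (lsub u a)" using ladd_lsub_cancel[OF lu] by (rule sym)
    moreover have "lsub u a \<in> seqs (length a)" using u by (simp add: seqs_def)
    ultimately show "u \<in> ladd a ` seqs (length a)" by blast
  qed
qed

lemma map_ladd_unif:
  fixes a :: "'a::{finite,ab_group_add} list"
  shows "map_pmf (ladd a) (unif_seq (length a)) = unif_seq (length a)"
  unfolding unif_seq_def
  by (subst map_pmf_of_set_inj[OF inj_ladd]) (simp_all add: image_ladd)

lemma lin_maps: "random_linear_code n l F \<Longrightarrow> f \<in> set_pmf F \<Longrightarrow> v \<in> seqs n \<Longrightarrow> f v \<in> seqs l"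
  unfolding random_linear_code_def is_linear_map_def by blast

lemma D1:
  fixes F :: "('v::{finite,ab_group_add} list \<Rightarrow> 'u::{finite,ab_group_add} list) pmf"
  assumes F: "random_linear_code n l F" and v: "v \<in> seqs n"
  shows "map_pmf (\<lambda>t. Gt t v) (Tp n l F) = unif_seq l"
proof -
  have "map_pmf (\<lambda>t. Gt t v) (Tp n l F) = do { f \<leftarrow> F; \<sigma>n \<leftarrow> unif_perm n; \<sigma>l \<leftarrow> unif_perm l;
      map_pmf (ladd (permute_list \<sigma>l (f (permute_list \<sigma>n v)))) (unif_seq l) }"
    by (simp add: Tp_def map_bind_pmf Gt_def map_pmf_def[symmetric] pmf.map_comp o_def)
  also have "\<dots> = do { f \<leftarrow> F; \<sigma>n \<leftarrow> unif_perm n; \<sigma>l \<leftarrow> unif_perm l; unif_seq l }"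
  proof (intro bind_pmf_cong refl)
    fix f \<sigma>n \<sigma>l assume f: "f \<in> set_pmf F" and sn: "\<sigma>n \<in> set_pmf (unif_perm n)"
    have "permute_list \<sigma>n v \<in> seqs n" using v by (simp add: seqs_def)
    then have "f (permute_list \<sigma>n v) \<in> seqs l" using lin_maps[OF F f] by blast
    then have len: "length (permute_list \<sigma>l (f (permute_list \<sigma>n v))) = l" by (simp add: seqs_def)
    show "map_pmf (ladd (permute_list \<sigma>l (f (permute_list \<sigma>n v)))) (unif_seq l) = unif_seq l"
      using map_ladd_unif[of "permute_list \<sigma>l (f (permute_list \<sigma>n v))"] unfolding len .
  qed
  also have "\<dots> = unif_seq l" by simp
  finally show ?thesis .
qed

lemma ab_eq_aux: "(b + (u1 - a) = u2) = (b - a = u2 - (u1::'a::ab_group_add))"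
  by (metis add.commute add_diff_cancel_left' add_diff_eq diff_add_cancel diff_diff_eq2)

lemma ladd_lsub_iff:
  fixes a b u1 u2 :: "'a::ab_group_add list"
  assumes "length a = l" "length b = l" "length u1 = l" "length u2 = l"
  shows "(ladd b (lsub u1 a) = u2) = (lsub b a = lsub u2 u1)"
proof -
  have "(ladd b (lsub u1 a) = u2) = (\<forall>i<l. b!i + (u1!i - a!i) = u2!i)"
    using assms by (simp add: list_eq_iff_nth_eq nth_ladd nth_lsub)
  also have "\<dots> = (\<forall>i<l. b!i - a!i = u2!i - u1!i)" by (simp only: ab_eq_aux)
  also have "\<dots> = (lsub b a = lsub u2 u1)"
    using assms by (simp add: list_eq_iff_nth_eq nth_lsub)
  finally show ?thesis .
qed

lemma multinom_pos:
  fixes w :: "'a::finite list"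
  assumes "length w = n" "n > 0"
  shows "multinom n (type_of w) > 0"
proof -
  have "w \<in> {ys. mset ys = mset w}" by simp
  then have "card {ys. mset ys = mset w} > 0" using finite_mset_class[of w] card_gt_0_iff by blast
  then show ?thesis using multinom_card[OF assms] by simp
qed

lemma prob_as_exp: "measure_pmf.prob p S = measure_pmf.expectation p (indicator S)"
  by simp

lemma D2:
  fixes F :: "('v::{finite,ab_group_add} list \<Rightarrow> 'u::{finite,ab_group_add} list) pmf"
  assumes F: "random_linear_code n l F" and n: "n > 0" and l: "l > 0"
    and v: "v \<in> seqs n" and v': "v' \<in> seqs n" and u1: "u1 \<in> seqs l" and u2: "u2 \<in> seqs l"
  shows "measure_pmf.prob (Tp n l F) {t. Gt t v = u1 \<and> Gt t v' = u2}
       = alpha n l F (type_of (lsub v' v)) (type_of (lsub u2 u1)) / (real CARD('u) ^ l) / (real CARD('u) ^ l)"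
proof -
  define S where "S = {t. Gt t v = u1 \<and> Gt t v' = u2}"
  define w where "w = lsub v' v"
  define d where "d = lsub u2 u1"
  define K where "K = real CARD('u) ^ l"
  define c where "c = (\<lambda>f::'v list \<Rightarrow> 'u list. real (card {w'\<in>seqs n. type_of w' = type_of w \<and> type_of (f w') = type_of d}))"
  define mn where "mn = multinom n (type_of w)"
  define ml where "ml = multinom l (type_of d)"
  have wl: "length w = n" using v v' unfolding w_def seqs_def by simp
  have dl: "length d = l" using u1 u2 unfolding d_def seqs_def by simp
  have K: "K > 0" unfolding K_def by simp
  have cardL: "real (card (seqs l :: 'u list set)) = K" unfolding K_def card_seqs by simp
  have mn: "mn > 0" unfolding mn_def by (rule multinom_pos[OF wl n])
  have ml: "ml > 0" unfolding ml_def by (rule multinom_pos[OF dl l])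
  have inner: "measure_pmf.expectation (unif_seq l) (\<lambda>ub. indicator S (f, \<sigma>n, \<sigma>l, ub))
      = indicator {d} (permute_list \<sigma>l (f (permute_list \<sigma>n w))) / K"
    if f: "f \<in> set_pmf F" and sn: "\<sigma>n permutes {..<n}" and sl: "\<sigma>l permutes {..<l}" for f \<sigma>n \<sigma>l
  proof -
    define a where "a = permute_list \<sigma>l (f (permute_list \<sigma>n v))"
    define b where "b = permute_list \<sigma>l (f (permute_list \<sigma>n v'))"
    have pv: "permute_list \<sigma>n v \<in> seqs n" "permute_list \<sigma>n v' \<in> seqs n" using v v' by (simp_all add: seqs_def)
    have fa: "f (permute_list \<sigma>n v) \<in> seqs l" "f (permute_list \<sigma>n v') \<in> seqs l"
      using lin_maps[OF F f] pv by blast+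
    have al: "length a = l" and bl: "length b = l" using fa unfolding a_def b_def seqs_def by simp_all
    have u1l: "length u1 = l" and u2l: "length u2 = l" using u1 u2 by (simp_all add: seqs_def)
    have ind: "indicator S (f, \<sigma>n, \<sigma>l, ub) = (if ub = lsub u1 a \<and> ladd b ub = u2 then 1 else 0 :: real)"
      if "ub \<in> seqs l" for ub
    proof -
      have ul: "length ub = l" using that by (simp add: seqs_def)
      have iff: "(ladd a ub = u1) = (ub = lsub u1 a)" using ladd_eq_iff[of a ub u1] al ul u1l by simp
      have "indicator S (f, \<sigma>n, \<sigma>l, ub) = (if ladd a ub = u1 \<and> ladd b ub = u2 then 1 else 0 :: real)"
        unfolding S_def Gt_def a_def b_def indicator_def by simp
      then show ?thesis unfolding iff .
    qed
    have "measure_pmf.expectation (unif_seq l) (\<lambda>ub. indicator S (f, \<sigma>n, \<sigma>l, ub))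
        = (\<Sum>ub\<in>seqs l. indicator S (f, \<sigma>n, \<sigma>l, ub)) / K"
      unfolding unif_seq_def cardL[symmetric] by (rule integral_pmf_of_set[OF seqs_ne finite_seqs])
    also have "(\<Sum>ub\<in>seqs l. indicator S (f, \<sigma>n, \<sigma>l, ub)) = (\<Sum>ub\<in>seqs l. if ub = lsub u1 a then (if ladd b (lsub u1 a) = u2 then 1 else 0) else 0 :: real)"
      by (rule sum.cong[OF refl]) (simp add: ind)
    also have "\<dots> = (if ladd b (lsub u1 a) = u2 then 1 else 0)"
    proof -
      have "lsub u1 a \<in> seqs l" using al u1l by (simp add: seqs_def)
      then show ?thesis by (simp add: sum.delta')
    qed
    also have "(ladd b (lsub u1 a) = u2) = (lsub b a = d)"
      unfolding d_def by (rule ladd_lsub_iff[OF al bl u1l u2l])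
    also have "lsub b a = permute_list \<sigma>l (f (permute_list \<sigma>n w))"
    proof -
      have slp: "\<sigma>l permutes {..<length (f (permute_list \<sigma>n v'))}" using sl fa by (simp add: seqs_def)
      have "lsub b a = permute_list \<sigma>l (lsub (f (permute_list \<sigma>n v')) (f (permute_list \<sigma>n v)))"
        unfolding a_def b_def using fa by (intro permute_lsub[symmetric] slp) (simp add: seqs_def)
      also have "lsub (f (permute_list \<sigma>n v')) (f (permute_list \<sigma>n v)) = f (lsub (permute_list \<sigma>n v') (permute_list \<sigma>n v))"
        using F f pv unfolding random_linear_code_def by (intro linear_lsub[symmetric]) auto
      also have "lsub (permute_list \<sigma>n v') (permute_list \<sigma>n v) = permute_list \<sigma>n w"
        unfolding w_def using v v' sn by (intro permute_lsub[symmetric]) (simp_all add: seqs_def)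
      finally show ?thesis .
    qed
    finally show ?thesis by (simp add: indicator_def)
  qed
  have "measure_pmf.prob (Tp n l F) S = measure_pmf.expectation (Tp n l F) (indicator S)" by simp
  also have "\<dots> = measure_pmf.expectation F (\<lambda>f. measure_pmf.expectation (unif_perm n) (\<lambda>\<sigma>n.
      measure_pmf.expectation (unif_perm l) (\<lambda>\<sigma>l. measure_pmf.expectation (unif_seq l) (\<lambda>ub.
        indicator S (f, \<sigma>n, \<sigma>l, ub)))))"
    by (rule exp_Tp[where B=1]) (simp add: indicator_def)
  also have "\<dots> = measure_pmf.expectation F (\<lambda>f. measure_pmf.expectation (unif_perm n) (\<lambda>\<sigma>n.
      measure_pmf.expectation (unif_perm l) (\<lambda>\<sigma>l. indicator {d} (permute_list \<sigma>l (f (permute_list \<sigma>n w))) / K)))"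
    by (intro exp_cong_pmf) (simp add: inner set_unif_perm)
  also have "\<dots> = measure_pmf.expectation F (\<lambda>f. c f / (mn * ml) / K)"
  proof (intro exp_cong_pmf)
    fix f assume f: "f \<in> set_pmf F"
    have fm: "\<forall>x\<in>seqs n. f x \<in> seqs l" using lin_maps[OF F f] by blast
    show "measure_pmf.expectation (unif_perm n) (\<lambda>\<sigma>n.
      measure_pmf.expectation (unif_perm l) (\<lambda>\<sigma>l. indicator {d} (permute_list \<sigma>l (f (permute_list \<sigma>n w))) / K))
      = c f / (mn * ml) / K"
      using perm_prob[OF wl n dl l fm] unfolding c_def mn_def ml_def by simp
  qed
  also have "\<dots> = measure_pmf.expectation F c / (mn * ml) / K" by simp
  also have "\<dots> = alpha n l F (type_of w) (type_of d) / K / K"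
  proof -
    have Vn: "real CARD('v) ^ n > 0" by simp
    have "alpha n l F (type_of w) (type_of d) = measure_pmf.expectation F c / real CARD('v) ^ n
         / (mn * ml * inverse (real CARD('v) ^ n) * inverse K)"
      unfolding alpha_def S_count_def c_def mn_def ml_def K_def by simp
    then show ?thesis using Vn K mn ml by (simp add: field_simps)
  qed
  finally show ?thesis unfolding S_def w_def d_def K_def .
qed

lemma exp_mono_bdd:
  fixes f g :: "'a \<Rightarrow> real"
  assumes "\<And>x. \<bar>f x\<bar> \<le> B" "\<And>x. \<bar>g x\<bar> \<le> B" "\<And>x. x \<in> set_pmf p \<Longrightarrow> f x \<le> g x"
  shows "measure_pmf.expectation p f \<le> measure_pmf.expectation p g"
  by (rule integral_mono_AE) (auto intro: integrable_bdd assms AE_pmfI)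

lemma exp_finite:
  fixes f :: "'a \<Rightarrow> real"
  assumes "finite S" "set_pmf p \<subseteq> S"
  shows "measure_pmf.expectation p f = (\<Sum>x\<in>S. pmf p x * f x)"
  by (subst integral_measure_pmf_real[OF assms(1)]) (use assms(2) in \<open>auto simp: mult.commute\<close>)

locale sys =
  fixes n l :: nat and PV :: "'v::{finite,ab_group_add} list pmf" and W :: "'x list \<Rightarrow> 'y list pmf"
    and F :: "('v list \<Rightarrow> 'u::{finite,ab_group_add} list) pmf" and q :: "'v list \<Rightarrow> 'u list \<Rightarrow> 'x list"
    and g :: real
  assumes n_pos: "n > 0" and l_pos: "l > 0" and PV_supp: "set_pmf PV \<subseteq> seqs n"
    and F_lin: "random_linear_code n l F"
begin

definition "J = joint PV l q W"
definition "PY = map_pmf (\<lambda>(v, x, y). y) J"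
definition "A = {(v, x, y).
                    1 / real n * ln (pmf (W x) y / pmf (map_pmf (\<lambda>(v, x, y). y) (joint PV l q W)) y)
                    \<le> 1 / real n * ln (1 / pmf PV v)
                      + 1 / real n * ln (beta' n l F q v x) + g}"
definition "good v x y \<longleftrightarrow> (v, x, y) \<notin> A \<and> pmf PV v > 0 \<and> pmf (W x) y > 0 \<and> pmf PY y > 0"
definition "K = real CARD('u) ^ l"
definition "bp v x = max 0 (beta' n l F q v x)"
definition "dec \<phi> y = (if \<exists>v'\<in>seqs n. good v' (\<phi> v') y then SOME v'. v' \<in> seqs n \<and> good v' (\<phi> v') y else replicate n 0)"
definition "err \<phi> = measure_pmf.prob (do { v \<leftarrow> PV; y \<leftarrow> W (\<phi> v); return_pmf (v, y) }) {(v, y). v \<noteq> dec \<phi> y}"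

lemma dec_in: "dec \<phi> y \<in> seqs n"
proof (cases "\<exists>v'\<in>seqs n. good v' (\<phi> v') y")
  case True
  then have "\<exists>v'. v' \<in> seqs n \<and> good v' (\<phi> v') y" by blast
  then have "(SOME v'. v' \<in> seqs n \<and> good v' (\<phi> v') y) \<in> seqs n" by (rule someI2_ex) blast
  then show ?thesis using True unfolding dec_def by simp
next
  case False then show ?thesis unfolding dec_def by (simp add: seqs_def)
qed

lemma opt_le: "opt_error n PV W \<phi> \<le> err \<phi>"
  unfolding opt_error_def err_def
  by (rule cINF_lower[of _ _ "dec \<phi>"]) (auto intro: bdd_belowI[where m=0] simp: dec_in)

lemma opt_bounds: "0 \<le> opt_error n PV W \<phi>" "opt_error n PV W \<phi> \<le> 1"
proof -
  have "dec \<phi> \<in> {\<psi> :: 'y list \<Rightarrow> 'v list. \<forall>y. \<psi> y \<in> seqs n}" using dec_in by simp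
  then have ne: "{\<psi> :: 'y list \<Rightarrow> 'v list. \<forall>y. \<psi> y \<in> seqs n} \<noteq> {}" by blast
  show "0 \<le> opt_error n PV W \<phi>" unfolding opt_error_def
    by (rule cINF_greatest[OF ne]) simp
  have "opt_error n PV W \<phi> \<le> err \<phi>" by (rule opt_le)
  also have "err \<phi> \<le> 1" unfolding err_def by simp
  finally show "opt_error n PV W \<phi> \<le> 1" .
qed

lemma err_exp: "err \<phi> = measure_pmf.expectation PV (\<lambda>v. measure_pmf.expectation (W (\<phi> v)) (\<lambda>y. of_bool (v \<noteq> dec \<phi> y) :: real))"
proof -
  have "err \<phi> = measure_pmf.expectation (do { v \<leftarrow> PV; y \<leftarrow> W (\<phi> v); return_pmf (v, y) }) (indicator {(v, y). v \<noteq> dec \<phi> y})"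
    unfolding err_def by simp
  also have "\<dots> = measure_pmf.expectation PV (\<lambda>v. measure_pmf.expectation (W (\<phi> v) \<bind> (\<lambda>y. return_pmf (v, y))) (indicator {(v, y). v \<noteq> dec \<phi> y}))"
    by (rule integral_bind_pmf_bdd[where B=1]) (simp add: indicator_def)
  also have "\<dots> = measure_pmf.expectation PV (\<lambda>v. measure_pmf.expectation (W (\<phi> v)) (\<lambda>y. of_bool (v \<noteq> dec \<phi> y)))"
  proof (rule exp_cong_pmf)
    fix v
    show "measure_pmf.expectation (W (\<phi> v) \<bind> (\<lambda>y. return_pmf (v, y))) (indicator {(v, y). v \<noteq> dec \<phi> y} :: _ \<Rightarrow> real)
        = measure_pmf.expectation (W (\<phi> v)) (\<lambda>y. of_bool (v \<noteq> dec \<phi> y))"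
    proof -
      have e: "W (\<phi> v) \<bind> (\<lambda>y. return_pmf (v, y)) = map_pmf (\<lambda>y. (v, y)) (W (\<phi> v))"
        by (simp add: map_pmf_def)
      have fe: "(\<lambda>y. indicator {(v, y). v \<noteq> dec \<phi> y} (v, y) :: real) = (\<lambda>y. of_bool (v \<noteq> dec \<phi> y))"
        by (auto simp: indicator_def)
      have "measure_pmf.expectation (W (\<phi> v) \<bind> (\<lambda>y. return_pmf (v, y))) (indicator {(v, y). v \<noteq> dec \<phi> y})
         = measure_pmf.expectation (map_pmf (\<lambda>y. (v, y)) (W (\<phi> v))) (indicator {(v, y). v \<noteq> dec \<phi> y} :: _ \<Rightarrow> real)"
        by (simp only: e)
      also have "\<dots> = measure_pmf.expectation (W (\<phi> v)) (\<lambda>y. indicator {(v, y). v \<noteq> dec \<phi> y} (v, y) :: real)"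
        by (rule integral_map_pmf)
      also have "\<dots> = measure_pmf.expectation (W (\<phi> v)) (\<lambda>y. of_bool (v \<noteq> dec \<phi> y))"
        by (simp only: fe)
      finally show ?thesis .
    qed
  qed
  finally show ?thesis .
qed

lemma pointwise:
  assumes v: "v \<in> seqs n"
  shows "of_bool (v \<noteq> dec \<phi> y) \<le> of_bool (\<not> good v (\<phi> v) y) + (\<Sum>v'\<in>seqs n - {v}. of_bool (good v' (\<phi> v') y) :: real)"
proof (cases "v = dec \<phi> y")
  case True then show ?thesis by (simp add: sum_nonneg)
next
  case False
  show ?thesis
  proof (cases "good v (\<phi> v) y")
    case False then show ?thesis by (simp add: sum_nonneg)
  next
    case True
    have "\<exists>v'\<in>seqs n - {v}. good v' (\<phi> v') y"
    proof (rule ccontr)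
      assume nn: "\<not> (\<exists>v'\<in>seqs n - {v}. good v' (\<phi> v') y)"
      have ex: "\<exists>v'\<in>seqs n. good v' (\<phi> v') y" using True v by blast
      have "(SOME v'. v' \<in> seqs n \<and> good v' (\<phi> v') y) = v"
        by (rule some_equality) (use True v nn in auto)
      then have "dec \<phi> y = v" unfolding dec_def using ex by simp
      then show False using \<open>v \<noteq> dec \<phi> y\<close> by simp
    qed
    then obtain v' where v': "v' \<in> seqs n - {v}" "good v' (\<phi> v') y" by blast
    have "of_bool (good v' (\<phi> v') y) \<le> (\<Sum>v'\<in>seqs n - {v}. of_bool (good v' (\<phi> v') y) :: real)"
      by (rule member_le_sum) (use v' in auto)
    then have "1 \<le> (\<Sum>v'\<in>seqs n - {v}. of_bool (good v' (\<phi> v') y) :: real)" using v' by simp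
    then show ?thesis by simp
  qed
qed

definition "B1 \<phi> = measure_pmf.expectation PV (\<lambda>v. measure_pmf.expectation (W (\<phi> v)) (\<lambda>y. of_bool (\<not> good v (\<phi> v) y) :: real))"
definition "B2 \<phi> = measure_pmf.expectation PV (\<lambda>v. measure_pmf.expectation (W (\<phi> v)) (\<lambda>y. \<Sum>v'\<in>seqs n - {v}. of_bool (good v' (\<phi> v') y) :: real))"

lemma sum_bool_bdd: "\<bar>\<Sum>v'\<in>S. of_bool (P v') :: real\<bar> \<le> real (card S)"
proof -
  have "(\<Sum>v'\<in>S. of_bool (P v') :: real) \<le> (\<Sum>v'\<in>S. 1)" by (intro sum_mono) simp
  then show ?thesis by (simp add: sum_nonneg)
qed

lemma B1_bdd: "\<bar>B1 \<phi>\<bar> \<le> 1"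
  unfolding B1_def by (rule exp_abs_bdd, rule exp_abs_bdd) simp

lemma B2_bdd: "\<bar>B2 \<phi>\<bar> \<le> real (card (seqs n :: 'v list set))"
  unfolding B2_def
proof (intro exp_abs_bdd)
  fix v :: "'v list" and y
  have "\<bar>\<Sum>v'\<in>seqs n - {v}. of_bool (good v' (\<phi> v') y) :: real\<bar> \<le> real (card (seqs n - {v}))"
    by (rule sum_bool_bdd)
  also have "\<dots> \<le> real (card (seqs n :: 'v list set))" by (simp add: card_mono)
  finally show "\<bar>\<Sum>v'\<in>seqs n - {v}. of_bool (good v' (\<phi> v') y) :: real\<bar> \<le> real (card (seqs n :: 'v list set))" .
qed

lemma err_le: "err \<phi> \<le> B1 \<phi> + B2 \<phi>"
proof -
  define C where "C = real (card (seqs n :: 'v list set))"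
  have C0: "0 \<le> C" unfolding C_def by simp
  have b: "\<bar>\<Sum>v'\<in>seqs n - {v}. of_bool (good v' (\<phi> v') y) :: real\<bar> \<le> C" for v y
  proof -
    have "\<bar>\<Sum>v'\<in>seqs n - {v}. of_bool (good v' (\<phi> v') y) :: real\<bar> \<le> real (card (seqs n - {v}))"
      by (rule sum_bool_bdd)
    also have "\<dots> \<le> C" unfolding C_def by (simp add: card_mono)
    finally show ?thesis .
  qed
  have bnd: "\<bar>of_bool (\<not> good v (\<phi> v) y) + (\<Sum>v'\<in>seqs n - {v}. of_bool (good v' (\<phi> v') y)) :: real\<bar> \<le> 1 + C" for v y
    using b[where v=v and y=y] by (smt (verit) of_bool_eq(1) of_bool_eq(2))
  have bnd1: "\<bar>of_bool (\<not> good v (\<phi> v) y) :: real\<bar> \<le> 1" for v y by simp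
  have bnd2: "\<bar>(\<Sum>v'\<in>seqs n - {v}. of_bool (good v' (\<phi> v') y)) :: real\<bar> \<le> C" for v y by (rule b)
  have bnd0: "\<bar>of_bool (v \<noteq> dec \<phi> y) :: real\<bar> \<le> 1 + C" for v y using C0 by simp
  have "err \<phi> \<le> measure_pmf.expectation PV (\<lambda>v. measure_pmf.expectation (W (\<phi> v)) (\<lambda>y.
      of_bool (\<not> good v (\<phi> v) y) + (\<Sum>v'\<in>seqs n - {v}. of_bool (good v' (\<phi> v') y)) :: real))"
    unfolding err_exp
  proof (rule exp_mono_bdd[where B="1 + C"])
    fix v :: "'v list"
    show "\<bar>measure_pmf.expectation (W (\<phi> v)) (\<lambda>y. of_bool (v \<noteq> dec \<phi> y) :: real)\<bar> \<le> 1 + C"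
      by (rule exp_abs_bdd) (rule bnd0)
    show "\<bar>measure_pmf.expectation (W (\<phi> v)) (\<lambda>y. of_bool (\<not> good v (\<phi> v) y) + (\<Sum>v'\<in>seqs n - {v}. of_bool (good v' (\<phi> v') y)) :: real)\<bar> \<le> 1 + C"
      by (rule exp_abs_bdd) (rule bnd)
    assume "v \<in> set_pmf PV"
    then have vs: "v \<in> seqs n" using PV_supp by blast
    show "measure_pmf.expectation (W (\<phi> v)) (\<lambda>y. of_bool (v \<noteq> dec \<phi> y) :: real)
       \<le> measure_pmf.expectation (W (\<phi> v)) (\<lambda>y. of_bool (\<not> good v (\<phi> v) y) + (\<Sum>v'\<in>seqs n - {v}. of_bool (good v' (\<phi> v') y)) :: real)"
      by (rule exp_mono_bdd[where B="1 + C"]) (rule bnd0, rule bnd, rule pointwise[OF vs])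
  qed
  also have "\<dots> = measure_pmf.expectation PV (\<lambda>v. measure_pmf.expectation (W (\<phi> v)) (\<lambda>y. of_bool (\<not> good v (\<phi> v) y) :: real)
        + measure_pmf.expectation (W (\<phi> v)) (\<lambda>y. (\<Sum>v'\<in>seqs n - {v}. of_bool (good v' (\<phi> v') y)) :: real))"
    apply (rule exp_cong_pmf, rule Bochner_Integration.integral_add)
     apply (rule integrable_bdd[where B=1], rule bnd1)
    apply (rule integrable_bdd[where B=C], rule bnd2)
    done
  also have "\<dots> = B1 \<phi> + B2 \<phi>"
    unfolding B1_def B2_def
    apply (rule Bochner_Integration.integral_add)
     apply (rule integrable_bdd[where B=1], rule exp_abs_bdd, rule bnd1)
    apply (rule integrable_bdd[where B=C], rule exp_abs_bdd, rule bnd2)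
    done
  finally show ?thesis .
qed

end

lemma measure_le_scaled:
  fixes M N :: "'a pmf"
  assumes c: "c \<ge> 0" and d: "d \<ge> 0" and le: "\<And>y. y \<in> G \<Longrightarrow> c * pmf M y \<le> d * pmf N y"
  shows "c * measure_pmf.prob M G \<le> d * measure_pmf.prob N G"
proof -
  have em: "emeasure (measure_pmf P) G = (\<integral>\<^sup>+x. ennreal (pmf P x) * indicator G x \<partial>count_space UNIV)" for P :: "'a pmf"
    by (subst nn_integral_indicator[symmetric]) (simp_all add: nn_integral_measure_pmf)
  have "ennreal (c * measure_pmf.prob M G) = ennreal c * emeasure (measure_pmf M) G"
    using c by (simp add: ennreal_mult measure_pmf.emeasure_eq_measure)
  also have "\<dots> = (\<integral>\<^sup>+x. ennreal c * (ennreal (pmf M x) * indicator G x) \<partial>count_space UNIV)"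
    unfolding em by (rule nn_integral_cmult[symmetric]) simp
  also have "\<dots> \<le> (\<integral>\<^sup>+x. ennreal d * (ennreal (pmf N x) * indicator G x) \<partial>count_space UNIV)"
  proof (rule nn_integral_mono)
    fix x
    show "ennreal c * (ennreal (pmf M x) * indicator G x) \<le> ennreal d * (ennreal (pmf N x) * indicator G x)"
    proof (cases "x \<in> G")
      case True
      then have "ennreal (c * pmf M x) \<le> ennreal (d * pmf N x)" using le by (intro ennreal_leI) auto
      then show ?thesis using True c d by (simp add: ennreal_mult)
    next
      case False then show ?thesis by simp
    qed
  qed
  also have "\<dots> = ennreal d * emeasure (measure_pmf N) G"
    unfolding em by (rule nn_integral_cmult) simp
  also have "\<dots> = ennreal (d * measure_pmf.prob N G)"
    using d by (simp add: ennreal_mult measure_pmf.emeasure_eq_measure)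
  finally show ?thesis using d by (simp add: ennreal_le_iff)
qed

context sys begin

lemma exp_J:
  fixes f :: "_ \<Rightarrow> real"
  assumes bf: "\<And>t. \<bar>f t\<bar> \<le> B"
  shows "measure_pmf.expectation J f = measure_pmf.expectation PV (\<lambda>v. measure_pmf.expectation (unif_seq l)
           (\<lambda>u. measure_pmf.expectation (W (q v u)) (\<lambda>y. f (v, q v u, y))))"
proof -
  have e1: "W x \<bind> (\<lambda>y. return_pmf (v, x, y)) = map_pmf (\<lambda>y. (v, x, y)) (W x)" for v x
    by (simp add: map_pmf_def)
  have b2: "\<bar>measure_pmf.expectation (W x \<bind> (\<lambda>y. return_pmf (v, x, y))) f\<bar> \<le> B" for v x
    by (rule exp_abs_bdd) (rule bf)
  have "measure_pmf.expectation J f = measure_pmf.expectation PV (\<lambda>v.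
        measure_pmf.expectation (map_pmf (q v) (unif_seq l) \<bind> (\<lambda>x. W x \<bind> (\<lambda>y. return_pmf (v, x, y)))) f)"
    unfolding J_def joint_def by (rule integral_bind_pmf_bdd[where B=B]) (rule bf)
  also have "\<dots> = measure_pmf.expectation PV (\<lambda>v. measure_pmf.expectation (map_pmf (q v) (unif_seq l))
        (\<lambda>x. measure_pmf.expectation (W x \<bind> (\<lambda>y. return_pmf (v, x, y))) f))"
    by (rule exp_cong_pmf, rule integral_bind_pmf_bdd[where B=B]) (rule bf)
  also have "\<dots> = measure_pmf.expectation PV (\<lambda>v. measure_pmf.expectation (unif_seq l)
           (\<lambda>u. measure_pmf.expectation (W (q v u)) (\<lambda>y. f (v, q v u, y))))"
    by (rule exp_cong_pmf) (simp add: e1)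
  finally show ?thesis .
qed

lemma prob_J: "measure_pmf.prob J S = measure_pmf.expectation PV (\<lambda>v. measure_pmf.expectation (unif_seq l)
           (\<lambda>u. measure_pmf.expectation (W (q v u)) (\<lambda>y. indicator S (v, q v u, y) :: real)))"
proof -
  have "measure_pmf.prob J S = measure_pmf.expectation J (indicator S)" by simp
  also have "\<dots> = measure_pmf.expectation PV (\<lambda>v. measure_pmf.expectation (unif_seq l)
           (\<lambda>u. measure_pmf.expectation (W (q v u)) (\<lambda>y. indicator S (v, q v u, y) :: real)))"
    by (rule exp_J[where B=1]) (simp add: indicator_def)
  finally show ?thesis .
qed

lemma exp_PY:
  fixes h :: "_ \<Rightarrow> real"
  assumes bh: "\<And>y. \<bar>h y\<bar> \<le> B"
  shows "measure_pmf.expectation PY h = measure_pmf.expectation PV (\<lambda>v. measure_pmf.expectation (unif_seq l)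
           (\<lambda>u. measure_pmf.expectation (W (q v u)) h))"
proof -
  have "measure_pmf.expectation PY h = measure_pmf.expectation J (\<lambda>t. h (case t of (v, x, y) \<Rightarrow> y))"
    unfolding PY_def by simp
  also have "\<dots> = measure_pmf.expectation PV (\<lambda>v. measure_pmf.expectation (unif_seq l)
           (\<lambda>u. measure_pmf.expectation (W (q v u)) (\<lambda>y. h (case (v, q v u, y) of (v, x, y) \<Rightarrow> y))))"
    by (rule exp_J[where B=B]) (auto simp: bh split: prod.splits)
  finally show ?thesis by simp
qed

lemma supp_PY:
  assumes "v \<in> set_pmf PV" "u \<in> seqs l" "y \<in> set_pmf (W (q v u))"
  shows "y \<in> set_pmf PY"
proof -
  have "(v, q v u, y) \<in> set_pmf J"
    using assms unfolding J_def joint_def by (auto simp: set_unif_seq)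
  then show ?thesis unfolding PY_def by force
qed

end

context sys begin

definition "T = Tp n l F"
definition "Phi t = (\<lambda>v. q v (Gt t v))"

lemma B1_bdd': "\<bar>B1 \<phi>\<bar> \<le> 1 + real (card (seqs n :: 'v list set))"
  using B1_bdd[of \<phi>] by simp
lemma B2_bdd': "\<bar>B2 \<phi>\<bar> \<le> 1 + real (card (seqs n :: 'v list set))"
  using B2_bdd[of \<phi>] by simp

lemma L5: "avg_error n l PV W F q \<le> measure_pmf.expectation T (\<lambda>t. B1 (Phi t)) + measure_pmf.expectation T (\<lambda>t. B2 (Phi t))"
proof -
  define C where "C = real (card (seqs n :: 'v list set))"
  have C0: "0 \<le> C" unfolding C_def by simp
  have "avg_error n l PV W F q = measure_pmf.expectation T (\<lambda>t. opt_error n PV W (Phi t))"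
    unfolding avg_error_def enc_map T_def Phi_def by simp
  also have "\<dots> \<le> measure_pmf.expectation T (\<lambda>t. B1 (Phi t) + B2 (Phi t))"
  proof (rule exp_mono_bdd[where B="2 + 2 * C"])
    fix t
    show "\<bar>opt_error n PV W (Phi t)\<bar> \<le> 2 + 2 * C" using opt_bounds[of "Phi t"] C0 by simp
    show "\<bar>B1 (Phi t) + B2 (Phi t)\<bar> \<le> 2 + 2 * C"
      using B1_bdd'[of "Phi t"] B2_bdd'[of "Phi t"] unfolding C_def by simp
    show "opt_error n PV W (Phi t) \<le> B1 (Phi t) + B2 (Phi t)"
      using opt_le[of "Phi t"] err_le[of "Phi t"] by simp
  qed
  also have "\<dots> = measure_pmf.expectation T (\<lambda>t. B1 (Phi t)) + measure_pmf.expectation T (\<lambda>t. B2 (Phi t))"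
    by (rule Bochner_Integration.integral_add; rule integrable_bdd, rule B1_bdd' B2_bdd')
  finally show ?thesis .
qed

lemma supp_T_Gt:
  assumes "t \<in> set_pmf T" "v \<in> seqs n"
  shows "Gt t v \<in> seqs l"
proof -
  have "map_pmf (\<lambda>t. Gt t v) T = unif_seq l" unfolding T_def by (rule D1[OF F_lin assms(2)])
  then have "set_pmf (map_pmf (\<lambda>t. Gt t v) T) = seqs l" by (simp add: set_unif_seq)
  then show ?thesis using assms(1) by auto
qed

lemma exp_T_single:
  fixes k :: "'u list \<Rightarrow> real"
  assumes "v \<in> seqs n"
  shows "measure_pmf.expectation T (\<lambda>t. k (Gt t v)) = measure_pmf.expectation (unif_seq l) k"
proof -
  have "measure_pmf.expectation T (\<lambda>t. k (Gt t v)) = measure_pmf.expectation (map_pmf (\<lambda>t. Gt t v) T) k"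
    by simp
  also have "map_pmf (\<lambda>t. Gt t v) T = unif_seq l" unfolding T_def by (rule D1[OF F_lin assms])
  finally show ?thesis .
qed

lemma exp_sum_mult:
  fixes f :: "'a \<Rightarrow> 'b \<Rightarrow> real"
  assumes "finite S" "\<And>x t. \<bar>f x t\<bar> \<le> B"
  shows "measure_pmf.expectation p (\<lambda>t. \<Sum>x\<in>S. c x * f x t) = (\<Sum>x\<in>S. c x * measure_pmf.expectation p (f x))"
proof -
  have "measure_pmf.expectation p (\<lambda>t. \<Sum>x\<in>S. c x * f x t) = (\<Sum>x\<in>S. measure_pmf.expectation p (\<lambda>t. c x * f x t))"
    by (rule Bochner_Integration.integral_sum, rule integrable_mult_right, rule integrable_bdd[where B=B], rule assms(2))
  also have "\<dots> = (\<Sum>x\<in>S. c x * measure_pmf.expectation p (f x))" by simp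
  finally show ?thesis .
qed

lemma L6: "measure_pmf.expectation T (\<lambda>t. B1 (Phi t)) \<le> measure_pmf.prob J A"
proof -
  define k where "k = (\<lambda>v u. measure_pmf.expectation (W (q v u)) (\<lambda>y. of_bool (\<not> good v (q v u) y) :: real))"
  have kb: "\<bar>k v u\<bar> \<le> 1" for v u unfolding k_def by (rule exp_abs_bdd) simp
  have "measure_pmf.expectation T (\<lambda>t. B1 (Phi t)) = measure_pmf.expectation T (\<lambda>t. \<Sum>v\<in>seqs n. pmf PV v * k v (Gt t v))"
    unfolding B1_def Phi_def k_def by (subst exp_finite[OF finite_seqs PV_supp]) (rule refl)
  also have "\<dots> = (\<Sum>v\<in>seqs n. pmf PV v * measure_pmf.expectation T (\<lambda>t. k v (Gt t v)))"
    by (rule exp_sum_mult[where B=1]) (simp_all add: kb)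
  also have "\<dots> = (\<Sum>v\<in>seqs n. pmf PV v * measure_pmf.expectation (unif_seq l) (k v))"
    by (rule sum.cong[OF refl]) (simp add: exp_T_single)
  also have "\<dots> = measure_pmf.expectation PV (\<lambda>v. measure_pmf.expectation (unif_seq l) (k v))"
    by (rule exp_finite[OF finite_seqs PV_supp, symmetric])
  also have "\<dots> \<le> measure_pmf.expectation PV (\<lambda>v. measure_pmf.expectation (unif_seq l)
           (\<lambda>u. measure_pmf.expectation (W (q v u)) (\<lambda>y. indicator A (v, q v u, y) :: real)))"
  proof (rule exp_mono_bdd[where B=1])
    fix v
    show "\<bar>measure_pmf.expectation (unif_seq l) (k v)\<bar> \<le> 1" by (rule exp_abs_bdd) (rule kb)
    show "\<bar>measure_pmf.expectation (unif_seq l) (\<lambda>u. measure_pmf.expectation (W (q v u)) (\<lambda>y. indicator A (v, q v u, y) :: real))\<bar> \<le> 1"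
      by (rule exp_abs_bdd, rule exp_abs_bdd) (simp add: indicator_def)
    assume v: "v \<in> set_pmf PV"
    show "measure_pmf.expectation (unif_seq l) (k v) \<le> measure_pmf.expectation (unif_seq l)
           (\<lambda>u. measure_pmf.expectation (W (q v u)) (\<lambda>y. indicator A (v, q v u, y) :: real))"
    proof (rule exp_mono_bdd[where B=1])
      fix u
      show "\<bar>k v u\<bar> \<le> 1" by (rule kb)
      show "\<bar>measure_pmf.expectation (W (q v u)) (\<lambda>y. indicator A (v, q v u, y) :: real)\<bar> \<le> 1"
        by (rule exp_abs_bdd) (simp add: indicator_def)
      assume u: "u \<in> set_pmf (unif_seq l)"
      show "k v u \<le> measure_pmf.expectation (W (q v u)) (\<lambda>y. indicator A (v, q v u, y) :: real)"
        unfolding k_def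
      proof (rule exp_mono_bdd[where B=1])
        fix y
        show "\<bar>of_bool (\<not> good v (q v u) y) :: real\<bar> \<le> 1" by simp
        show "\<bar>indicator A (v, q v u, y) :: real\<bar> \<le> 1" by (simp add: indicator_def)
        assume y: "y \<in> set_pmf (W (q v u))"
        have "y \<in> set_pmf PY" using supp_PY[OF v _ y] u by (simp add: set_unif_seq)
        then have "pmf PY y > 0" by (simp add: pmf_positive)
        moreover have "pmf PV v > 0" using v by (simp add: pmf_positive)
        moreover have "pmf (W (q v u)) y > 0" using y by (simp add: pmf_positive)
        ultimately show "of_bool (\<not> good v (q v u) y) \<le> (indicator A (v, q v u, y) :: real)"
          unfolding good_def by (auto simp: indicator_def)
      qed
    qed
  qed
  also have "\<dots> = measure_pmf.prob J A" by (rule prob_J[symmetric])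
  finally show ?thesis .
qed

end

context sys begin

lemma PY_alt: "pmf (map_pmf (\<lambda>(v, x, y). y) (joint PV l q W)) y = pmf PY y"
  unfolding PY_def J_def ..

lemma GOODB:
  assumes gd: "good v x y"
  shows "bp v x * pmf PY y \<le> pmf PV v * exp (- (real n * g)) * pmf (W x) y"
proof (cases "beta' n l F q v x \<le> 0")
  case True
  then have "bp v x = 0" unfolding bp_def by simp
  then show ?thesis by simp
next
  case False
  define b where "b = beta' n l F q v x"
  define pv where "pv = pmf PV v"
  define w where "w = pmf (W x) y"
  define py where "py = pmf PY y"
  have b: "b > 0" using False unfolding b_def by simp
  have pos: "pv > 0" "w > 0" "py > 0" using gd unfolding good_def pv_def w_def py_def by auto
  have nA: "\<not> (1 / real n * ln (w / py) \<le> 1 / real n * ln (1 / pv) + 1 / real n * ln b + g)"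
    using gd unfolding good_def A_def PY_alt b_def pv_def w_def py_def by auto
  have np: "real n > 0" using n_pos by simp
  have "ln (1 / pv) + ln b + real n * g < ln (w / py)"
  proof -
    have "1 / real n * (ln (1 / pv) + ln b + real n * g) = 1 / real n * ln (1 / pv) + 1 / real n * ln b + g"
      using np by (simp add: field_simps)
    then have "1 / real n * (ln (1 / pv) + ln b + real n * g) < 1 / real n * ln (w / py)" using nA by simp
    then show ?thesis using np by (simp add: divide_less_cancel)
  qed
  also have "ln (1 / pv) + ln b = ln (b / pv)" using pos b by (simp add: ln_div)
  finally have "ln (b / pv) + real n * g < ln (w / py)" .
  then have "exp (ln (b / pv) + real n * g) < exp (ln (w / py))" by simp
  then have "b / pv * exp (real n * g) < w / py" using pos b by (simp add: exp_add)
  then have "b / pv * exp (real n * g) * (py * pv * exp (- (real n * g))) < w / py * (py * pv * exp (- (real n * g)))"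
    using pos by (intro mult_strict_right_mono) auto
  moreover have "b / pv * exp (real n * g) * (py * pv * exp (- (real n * g))) = b * py"
    using pos by (simp add: field_simps flip: exp_add)
  moreover have "w / py * (py * pv * exp (- (real n * g))) = pv * exp (- (real n * g)) * w"
    using pos by (simp add: field_simps)
  ultimately have "b * py < pv * exp (- (real n * g)) * w" by simp
  moreover have "bp v x = b" using b unfolding bp_def b_def by simp
  ultimately show ?thesis unfolding pv_def w_def py_def by simp
qed

lemma CM: "measure_pmf.expectation PY (\<lambda>y. bp v x * of_bool (good v x y)) \<le> pmf PV v * exp (- (real n * g))"
proof -
  have "measure_pmf.expectation PY (\<lambda>y. bp v x * of_bool (good v x y)) = bp v x * measure_pmf.prob PY {y. good v x y}"
  proof -
    have "(\<lambda>y. bp v x * of_bool (good v x y)) = (\<lambda>y. bp v x * indicator {y. good v x y} y)"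
      by (auto simp: indicator_def)
    then show ?thesis by simp
  qed
  also have "\<dots> \<le> (pmf PV v * exp (- (real n * g))) * measure_pmf.prob (W x) {y. good v x y}"
    by (rule measure_le_scaled) (simp add: bp_def, simp, simp add: GOODB)
  also have "\<dots> \<le> pmf PV v * exp (- (real n * g))"
    by (rule mult_left_le) simp_all
  finally show ?thesis .
qed

lemma finite_types: "finite (types n :: ('v \<Rightarrow> real) set)"
  unfolding types_def by simp

lemma beta_ge:
  assumes v: "v \<in> seqs n" and v': "v' \<in> seqs n" and ne: "v \<noteq> v'" and u1: "u1 \<in> seqs l"
  shows "(\<Sum>u2\<in>q_inv l q v' x. alpha n l F (type_of (lsub v' v)) (type_of (lsub u2 u1)) / real (card (q_inv l q v' x)))
           \<le> beta' n l F q v' x"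
proof -
  have wl: "length (lsub v' v) = n" using v v' by (simp add: seqs_def)
  have "type_of (lsub v' v) \<in> types n" unfolding types_def using wl by (auto simp: seqs_def)
  moreover have "type_of (lsub v' v) \<noteq> type_of (replicate n (0::'v))"
  proof
    assume "type_of (lsub v' v) = type_of (replicate n (0::'v))"
    then have "lsub v' v = replicate n 0" by (rule type_zero[OF wl n_pos])
    moreover have l1: "length v' = length v" and l2: "length v' = n" using v v' by (simp_all add: seqs_def)
    ultimately have "lsub v' v = replicate (length v') 0" by simp
    then have "v' = v" by (rule lsub_eq_zero[OF l1])
    then show False using ne by simp
  qed
  ultimately have mem: "(type_of (lsub v' v), u1) \<in> (types n - {type_of (replicate n 0)}) \<times> seqs l"
    using u1 by simp
  define f where "f = (\<lambda>(P, u1). \<Sum>u2\<in>q_inv l q v' x.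
              alpha n l F P (type_of (lsub u2 u1)) / real (card (q_inv l q v' x)))"
  define D where "D = (types n - {type_of (replicate n (0::'v))}) \<times> (seqs l :: 'u list set)"
  have fin: "finite (f ` D)" unfolding D_def using finite_types by simp
  have "f (type_of (lsub v' v), u1) \<in> f ` D" unfolding D_def using mem by (rule imageI)
  then have "f (type_of (lsub v' v), u1) \<le> Max (f ` D)" by (rule Max_ge[OF fin])
  then show ?thesis unfolding beta'_def f_def D_def by simp
qed

lemma FIB:
  assumes v: "v \<in> seqs n" and v': "v' \<in> seqs n" and ne: "v \<noteq> v'" and u1: "u1 \<in> seqs l"
  shows "(\<Sum>u2\<in>seqs l. alpha n l F (type_of (lsub v' v)) (type_of (lsub u2 u1)) * of_bool (good v' (q v' u2) y))
       \<le> (\<Sum>u2\<in>seqs l. bp v' (q v' u2) * of_bool (good v' (q v' u2) y))"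
proof -
  define al where "al = (\<lambda>u2. alpha n l F (type_of (lsub v' v)) (type_of (lsub u2 u1)))"
  define Q where "Q = (\<lambda>x. {u \<in> seqs l. q v' u = x})"
  have Qi: "Q x = q_inv l q v' x" for x unfolding Q_def q_inv_def ..
  have "(\<Sum>u2\<in>seqs l. al u2 * of_bool (good v' (q v' u2) y))
      = (\<Sum>x\<in>q v' ` seqs l. \<Sum>u2\<in>Q x. al u2 * of_bool (good v' (q v' u2) y))"
    unfolding Q_def by (rule sum.image_gen) simp
  also have "\<dots> \<le> (\<Sum>x\<in>q v' ` seqs l. \<Sum>u2\<in>Q x. bp v' (q v' u2) * of_bool (good v' (q v' u2) y))"
  proof (rule sum_mono)
    fix x assume x: "x \<in> q v' ` seqs l"
    have fQ: "finite (Q x)" unfolding Q_def by simp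
    have cQ: "card (Q x) > 0" using x fQ unfolding Q_def by (auto simp: card_gt_0_iff)
    have e1: "(\<Sum>u2\<in>Q x. al u2 * of_bool (good v' (q v' u2) y)) = of_bool (good v' x y) * (\<Sum>u2\<in>Q x. al u2)"
      unfolding sum_distrib_left by (rule sum.cong) (auto simp: Q_def)
    have e2: "(\<Sum>u2\<in>Q x. bp v' (q v' u2) * of_bool (good v' (q v' u2) y)) = of_bool (good v' x y) * (real (card (Q x)) * bp v' x)"
    proof -
      have "(\<Sum>u2\<in>Q x. bp v' (q v' u2) * of_bool (good v' (q v' u2) y)) = (\<Sum>u2\<in>Q x. of_bool (good v' x y) * bp v' x)"
        by (rule sum.cong) (auto simp: Q_def)
      then show ?thesis by simp
    qed
    have "(\<Sum>u2\<in>Q x. al u2) / real (card (Q x)) \<le> beta' n l F q v' x"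
      using beta_ge[OF v v' ne u1, of x] unfolding al_def Qi by (simp add: sum_divide_distrib)
    then have "(\<Sum>u2\<in>Q x. al u2) \<le> real (card (Q x)) * beta' n l F q v' x"
      using cQ by (simp add: divide_le_eq mult.commute)
    also have "\<dots> \<le> real (card (Q x)) * bp v' x" unfolding bp_def by (intro mult_left_mono) auto
    finally have "(\<Sum>u2\<in>Q x. al u2) \<le> real (card (Q x)) * bp v' x" .
    then show "(\<Sum>u2\<in>Q x. al u2 * of_bool (good v' (q v' u2) y)) \<le> (\<Sum>u2\<in>Q x. bp v' (q v' u2) * of_bool (good v' (q v' u2) y))"
      unfolding e1 e2 by (intro mult_left_mono) auto
  qed
  also have "\<dots> = (\<Sum>u2\<in>seqs l. bp v' (q v' u2) * of_bool (good v' (q v' u2) y))"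
    unfolding Q_def by (rule sum.image_gen[symmetric]) simp
  finally show ?thesis unfolding al_def .
qed

end

context sys begin

definition "kap v v' u1 u2 = measure_pmf.expectation (W (q v u1)) (\<lambda>y. of_bool (good v' (q v' u2) y) :: real)"
definition "H v' y = (\<Sum>u2\<in>seqs l. bp v' (q v' u2) * of_bool (good v' (q v' u2) y) / K)"
definition "HB v' = (\<Sum>u2\<in>(seqs l :: 'u list set). bp v' (q v' u2) / K)"

lemma K_pos: "K > 0" unfolding K_def by simp
lemma card_L: "real (card (seqs l :: 'u list set)) = K" unfolding K_def card_seqs by simp

lemma kap_bdd: "\<bar>kap v v' u1 u2\<bar> \<le> 1"
  unfolding kap_def by (rule exp_abs_bdd) simp

lemma bp_nonneg: "bp v x \<ge> 0" unfolding bp_def by simp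

lemma H_nonneg: "H v' y \<ge> 0"
  unfolding H_def using K_pos bp_nonneg by (intro sum_nonneg) simp

lemma H_bdd: "\<bar>H v' y\<bar> \<le> HB v'"
proof -
  have "H v' y \<le> HB v'" unfolding H_def HB_def
    using K_pos bp_nonneg by (intro sum_mono) (simp add: divide_right_mono)
  then show ?thesis using H_nonneg[of v' y] by simp
qed

lemma S1: "B2 (Phi t) = (\<Sum>v\<in>seqs n. pmf PV v * (\<Sum>v'\<in>seqs n - {v}. kap v v' (Gt t v) (Gt t v')))"
proof -
  have "B2 (Phi t) = (\<Sum>v\<in>seqs n. pmf PV v * measure_pmf.expectation (W (q v (Gt t v)))
          (\<lambda>y. \<Sum>v'\<in>seqs n - {v}. of_bool (good v' (q v' (Gt t v')) y) :: real))"
    unfolding B2_def Phi_def by (rule exp_finite[OF finite_seqs PV_supp])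
  also have "\<dots> = (\<Sum>v\<in>seqs n. pmf PV v * (\<Sum>v'\<in>seqs n - {v}. kap v v' (Gt t v) (Gt t v')))"
  proof (rule sum.cong[OF refl])
    fix v
    have "measure_pmf.expectation (W (q v (Gt t v))) (\<lambda>y. \<Sum>v'\<in>seqs n - {v}. of_bool (good v' (q v' (Gt t v')) y) :: real)
        = (\<Sum>v'\<in>seqs n - {v}. measure_pmf.expectation (W (q v (Gt t v))) (\<lambda>y. of_bool (good v' (q v' (Gt t v')) y) :: real))"
      by (rule Bochner_Integration.integral_sum, rule integrable_bdd[where B=1]) simp
    then show "pmf PV v * measure_pmf.expectation (W (q v (Gt t v))) (\<lambda>y. \<Sum>v'\<in>seqs n - {v}. of_bool (good v' (q v' (Gt t v')) y) :: real)
        = pmf PV v * (\<Sum>v'\<in>seqs n - {v}. kap v v' (Gt t v) (Gt t v'))"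
      unfolding kap_def by simp
  qed
  finally show ?thesis .
qed

lemma S1': "measure_pmf.expectation T (\<lambda>t. B2 (Phi t))
    = (\<Sum>v\<in>seqs n. pmf PV v * (\<Sum>v'\<in>seqs n - {v}. measure_pmf.expectation T (\<lambda>t. kap v v' (Gt t v) (Gt t v'))))"
proof -
  define C where "C = real (card (seqs n :: 'v list set))"
  have bd: "\<bar>\<Sum>v'\<in>seqs n - {v}. kap v v' (Gt t v) (Gt t v')\<bar> \<le> C" for v t
  proof -
    have "\<bar>\<Sum>v'\<in>seqs n - {v}. kap v v' (Gt t v) (Gt t v')\<bar> \<le> (\<Sum>v'\<in>seqs n - {v}. \<bar>kap v v' (Gt t v) (Gt t v')\<bar>)"
      by (rule sum_abs)
    also have "\<dots> \<le> (\<Sum>v'\<in>seqs n - {v}. 1)" by (intro sum_mono kap_bdd)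
    also have "\<dots> \<le> C" unfolding C_def by (simp add: card_mono)
    finally show ?thesis .
  qed
  have "measure_pmf.expectation T (\<lambda>t. B2 (Phi t))
      = measure_pmf.expectation T (\<lambda>t. \<Sum>v\<in>seqs n. pmf PV v * (\<Sum>v'\<in>seqs n - {v}. kap v v' (Gt t v) (Gt t v')))"
    unfolding S1 ..
  also have "\<dots> = (\<Sum>v\<in>seqs n. pmf PV v * measure_pmf.expectation T (\<lambda>t. \<Sum>v'\<in>seqs n - {v}. kap v v' (Gt t v) (Gt t v')))"
    by (rule exp_sum_mult[where B=C]) (simp_all add: bd)
  also have "\<dots> = (\<Sum>v\<in>seqs n. pmf PV v * (\<Sum>v'\<in>seqs n - {v}. measure_pmf.expectation T (\<lambda>t. kap v v' (Gt t v) (Gt t v'))))"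
  proof (rule sum.cong[OF refl])
    fix v
    have "measure_pmf.expectation T (\<lambda>t. \<Sum>v'\<in>seqs n - {v}. kap v v' (Gt t v) (Gt t v'))
        = (\<Sum>v'\<in>seqs n - {v}. measure_pmf.expectation T (\<lambda>t. kap v v' (Gt t v) (Gt t v')))"
      by (rule Bochner_Integration.integral_sum, rule integrable_bdd[where B=1]) (rule kap_bdd)
    then show "pmf PV v * measure_pmf.expectation T (\<lambda>t. \<Sum>v'\<in>seqs n - {v}. kap v v' (Gt t v) (Gt t v'))
      = pmf PV v * (\<Sum>v'\<in>seqs n - {v}. measure_pmf.expectation T (\<lambda>t. kap v v' (Gt t v) (Gt t v')))" by simp
  qed
  finally show ?thesis .
qed

end

context sys begin

lemma pair_pmf_val:
  assumes v: "v \<in> seqs n" and v': "v' \<in> seqs n" and u1: "u1 \<in> seqs l" and u2: "u2 \<in> seqs l"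
  shows "pmf (map_pmf (\<lambda>t. (Gt t v, Gt t v')) T) (u1, u2)
       = alpha n l F (type_of (lsub v' v)) (type_of (lsub u2 u1)) / K / K"
proof -
  have "pmf (map_pmf (\<lambda>t. (Gt t v, Gt t v')) T) (u1, u2) = measure_pmf.prob T ((\<lambda>t. (Gt t v, Gt t v')) -` {(u1, u2)})"
    by (rule pmf_map)
  also have "(\<lambda>t. (Gt t v, Gt t v')) -` {(u1, u2)} = {t. Gt t v = u1 \<and> Gt t v' = u2}" by auto
  also have "measure_pmf.prob T {t. Gt t v = u1 \<and> Gt t v' = u2} = alpha n l F (type_of (lsub v' v)) (type_of (lsub u2 u1)) / K / K"
    unfolding T_def K_def by (rule D2[OF F_lin n_pos l_pos v v' u1 u2])
  finally show ?thesis .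
qed

lemma S2:
  assumes v: "v \<in> seqs n" and v': "v' \<in> seqs n" and ne: "v \<noteq> v'"
  shows "measure_pmf.expectation T (\<lambda>t. kap v v' (Gt t v) (Gt t v'))
       \<le> measure_pmf.expectation (unif_seq l) (\<lambda>u1. measure_pmf.expectation (W (q v u1)) (H v'))"
proof -
  define L where "L = (seqs l :: 'u list set)"
  define al where "al = (\<lambda>u1 u2. alpha n l F (type_of (lsub v' v)) (type_of (lsub u2 u1)))"
  have finL: "finite L" unfolding L_def by simp
  have supp: "set_pmf (map_pmf (\<lambda>t. (Gt t v, Gt t v')) T) \<subseteq> L \<times> L"
    using supp_T_Gt[OF _ v] supp_T_Gt[OF _ v'] unfolding L_def by auto
  have "measure_pmf.expectation T (\<lambda>t. kap v v' (Gt t v) (Gt t v'))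
      = measure_pmf.expectation (map_pmf (\<lambda>t. (Gt t v, Gt t v')) T) (\<lambda>(u1, u2). kap v v' u1 u2)"
    by simp
  also have "\<dots> = (\<Sum>p\<in>L \<times> L. pmf (map_pmf (\<lambda>t. (Gt t v, Gt t v')) T) p * (case p of (u1, u2) \<Rightarrow> kap v v' u1 u2))"
    by (rule exp_finite) (use finL supp in auto)
  also have "\<dots> = (\<Sum>u1\<in>L. \<Sum>u2\<in>L. pmf (map_pmf (\<lambda>t. (Gt t v, Gt t v')) T) (u1, u2) * kap v v' u1 u2)"
    by (subst sum.cartesian_product) (simp add: case_prod_beta)
  also have "\<dots> = (\<Sum>u1\<in>L. (1 / K) * (\<Sum>u2\<in>L. al u1 u2 / K * kap v v' u1 u2))"
  proof (rule sum.cong[OF refl])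
    fix u1 assume u1: "u1 \<in> L"
    show "(\<Sum>u2\<in>L. pmf (map_pmf (\<lambda>t. (Gt t v, Gt t v')) T) (u1, u2) * kap v v' u1 u2)
        = 1 / K * (\<Sum>u2\<in>L. al u1 u2 / K * kap v v' u1 u2)"
      unfolding sum_distrib_left
      by (rule sum.cong[OF refl]) (use u1 in \<open>simp add: pair_pmf_val[OF v v'] L_def al_def\<close>)
  qed
  also have "\<dots> \<le> (\<Sum>u1\<in>L. (1 / K) * measure_pmf.expectation (W (q v u1)) (H v'))"
  proof (rule sum_mono)
    fix u1 assume u1: "u1 \<in> L"
    define BA where "BA = (\<Sum>u2\<in>L. \<bar>al u1 u2 / K\<bar>)"
    have e: "(\<Sum>u2\<in>L. al u1 u2 / K * kap v v' u1 u2)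
        = measure_pmf.expectation (W (q v u1)) (\<lambda>y. \<Sum>u2\<in>L. al u1 u2 / K * of_bool (good v' (q v' u2) y))"
      unfolding kap_def by (rule exp_sum_mult[where B=1, symmetric]) (simp_all add: finL)
    have "measure_pmf.expectation (W (q v u1)) (\<lambda>y. \<Sum>u2\<in>L. al u1 u2 / K * of_bool (good v' (q v' u2) y))
        \<le> measure_pmf.expectation (W (q v u1)) (H v')"
    proof (rule exp_mono_bdd[where B="BA + HB v'"])
      fix y
      have "\<bar>\<Sum>u2\<in>L. al u1 u2 / K * of_bool (good v' (q v' u2) y)\<bar> \<le> (\<Sum>u2\<in>L. \<bar>al u1 u2 / K * of_bool (good v' (q v' u2) y)\<bar>)"
        by (rule sum_abs)
      also have "\<dots> \<le> BA" unfolding BA_def by (intro sum_mono) (simp add: abs_mult)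
      finally have b1: "\<bar>\<Sum>u2\<in>L. al u1 u2 / K * of_bool (good v' (q v' u2) y)\<bar> \<le> BA" .
      have "HB v' \<ge> 0" using H_bdd[of v' y] by simp
      moreover have "BA \<ge> 0" unfolding BA_def by (simp add: sum_nonneg)
      ultimately show "\<bar>\<Sum>u2\<in>L. al u1 u2 / K * of_bool (good v' (q v' u2) y)\<bar> \<le> BA + HB v'"
        "\<bar>H v' y\<bar> \<le> BA + HB v'" using b1 H_bdd[of v' y] by linarith+
      have f: "(\<Sum>u2\<in>L. al u1 u2 * of_bool (good v' (q v' u2) y)) \<le> (\<Sum>u2\<in>L. bp v' (q v' u2) * of_bool (good v' (q v' u2) y))"
        using FIB[OF v v' ne, of u1 y] u1 unfolding L_def al_def by simp
      have "(\<Sum>u2\<in>L. al u1 u2 / K * of_bool (good v' (q v' u2) y)) = (\<Sum>u2\<in>L. al u1 u2 * of_bool (good v' (q v' u2) y)) / K"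
        by (simp add: sum_divide_distrib)
      also have "\<dots> \<le> (\<Sum>u2\<in>L. bp v' (q v' u2) * of_bool (good v' (q v' u2) y)) / K"
        using f K_pos by (simp add: divide_right_mono)
      also have "\<dots> = H v' y" unfolding H_def L_def by (rule sum_divide_distrib)
      finally show "(\<Sum>u2\<in>L. al u1 u2 / K * of_bool (good v' (q v' u2) y)) \<le> H v' y" .
    qed
    then show "1 / K * (\<Sum>u2\<in>L. al u1 u2 / K * kap v v' u1 u2) \<le> 1 / K * measure_pmf.expectation (W (q v u1)) (H v')"
      unfolding e using K_pos by (intro mult_left_mono) auto
  qed
  also have "\<dots> = measure_pmf.expectation (unif_seq l) (\<lambda>u1. measure_pmf.expectation (W (q v u1)) (H v'))"
  proof -
    have "measure_pmf.expectation (unif_seq l) (\<lambda>u1. measure_pmf.expectation (W (q v u1)) (H v'))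
        = (\<Sum>u1\<in>L. measure_pmf.expectation (W (q v u1)) (H v')) / K"
      unfolding unif_seq_def L_def card_L[symmetric] by (rule integral_pmf_of_set[OF seqs_ne finite_seqs])
    then show ?thesis by (simp add: sum_divide_distrib)
  qed
  finally show ?thesis .
qed

end

context sys begin

lemma S4: "measure_pmf.expectation PY (H v') \<le> pmf PV v' * exp (- (real n * g))"
proof -
  define L where "L = (seqs l :: 'u list set)"
  define BB where "BB = (\<Sum>u2\<in>L. bp v' (q v' u2))"
  have bb: "\<bar>bp v' (q v' u2) * of_bool (good v' (q v' u2) y)\<bar> \<le> BB" if "u2 \<in> L" for u2 y
  proof -
    have "\<bar>bp v' (q v' u2) * of_bool (good v' (q v' u2) y)\<bar> \<le> bp v' (q v' u2)" using bp_nonneg by simp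
    also have "\<dots> \<le> BB" unfolding BB_def using that bp_nonneg
      by (intro member_le_sum) (simp_all add: L_def)
    finally show ?thesis .
  qed
  have "H v' = (\<lambda>y. \<Sum>u2\<in>L. (1 / K) * (if u2 \<in> L then bp v' (q v' u2) * of_bool (good v' (q v' u2) y) else 0))"
    unfolding H_def L_def by (auto intro!: sum.cong)
  then have "measure_pmf.expectation PY (H v') = (\<Sum>u2\<in>L. (1 / K) * measure_pmf.expectation PY
         (\<lambda>y. if u2 \<in> L then bp v' (q v' u2) * of_bool (good v' (q v' u2) y) else 0))"
    by (simp only:) (rule exp_sum_mult[where B=BB], simp add: L_def, use bb in \<open>auto simp: BB_def L_def sum_nonneg bp_nonneg\<close>)
  also have "\<dots> = (\<Sum>u2\<in>L. (1 / K) * measure_pmf.expectation PY (\<lambda>y. bp v' (q v' u2) * of_bool (good v' (q v' u2) y)))"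
    by (rule sum.cong) auto
  also have "\<dots> \<le> (\<Sum>u2\<in>L. (1 / K) * (pmf PV v' * exp (- (real n * g))))"
    using K_pos CM by (intro sum_mono mult_left_mono) auto
  also have "\<dots> = pmf PV v' * exp (- (real n * g))"
    using K_pos card_L unfolding L_def by simp
  finally show ?thesis .
qed

lemma L7: "measure_pmf.expectation T (\<lambda>t. B2 (Phi t)) \<le> exp (- (real n * g))"
proof -
  define N where "N = (seqs n :: 'v list set)"
  define Q where "Q = (\<lambda>v v'. measure_pmf.expectation (unif_seq l) (\<lambda>u1. measure_pmf.expectation (W (q v u1)) (H v')))"
  have Q0: "Q v v' \<ge> 0" for v v'
    unfolding Q_def by (intro Bochner_Integration.integral_nonneg H_nonneg)
  have "measure_pmf.expectation T (\<lambda>t. B2 (Phi t))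
      = (\<Sum>v\<in>N. pmf PV v * (\<Sum>v'\<in>N - {v}. measure_pmf.expectation T (\<lambda>t. kap v v' (Gt t v) (Gt t v'))))"
    unfolding N_def by (rule S1')
  also have "\<dots> \<le> (\<Sum>v\<in>N. pmf PV v * (\<Sum>v'\<in>N - {v}. Q v v'))"
  proof (intro sum_mono mult_left_mono)
    fix v v' assume "v \<in> N" "v' \<in> N - {v}"
    then show "measure_pmf.expectation T (\<lambda>t. kap v v' (Gt t v) (Gt t v')) \<le> Q v v'"
      unfolding Q_def N_def by (intro S2) auto
  qed simp
  also have "\<dots> \<le> (\<Sum>v\<in>N. pmf PV v * (\<Sum>v'\<in>N. Q v v'))"
    by (intro sum_mono mult_left_mono sum_mono2) (auto simp: N_def Q0)
  also have "\<dots> = (\<Sum>v'\<in>N. \<Sum>v\<in>N. pmf PV v * Q v v')"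
    unfolding sum_distrib_left by (rule sum.swap)
  also have "\<dots> = (\<Sum>v'\<in>N. measure_pmf.expectation PY (H v'))"
  proof (rule sum.cong[OF refl])
    fix v'
    have "measure_pmf.expectation PY (H v') = measure_pmf.expectation PV (\<lambda>v. Q v v')"
      unfolding Q_def by (rule exp_PY[where B="HB v'"]) (rule H_bdd)
    also have "\<dots> = (\<Sum>v\<in>N. pmf PV v * Q v v')"
      unfolding N_def by (rule exp_finite[OF finite_seqs PV_supp])
    finally show "(\<Sum>v\<in>N. pmf PV v * Q v v') = measure_pmf.expectation PY (H v')" by simp
  qed
  also have "\<dots> \<le> (\<Sum>v'\<in>N. pmf PV v' * exp (- (real n * g)))"
    by (intro sum_mono S4)
  also have "\<dots> = exp (- (real n * g))"
  proof -
    have "(\<Sum>v'\<in>N. pmf PV v') = 1" unfolding N_def by (rule sum_pmf_eq_1[OF finite_seqs PV_supp])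
    then show ?thesis by (simp add: sum_distrib_right[symmetric])
  qed
  finally show ?thesis .
qed

theorem per_n: "avg_error n l PV W F q \<le> measure_pmf.prob J A + exp (- (real n * g))"
  using L5 L6 L7 by simp

end

theorem theorem1:
  fixes V :: "nat \<Rightarrow> ('v::{finite,ab_group_add}) list pmf"
    and W :: "nat \<Rightarrow> 'x list \<Rightarrow> 'y list pmf"
    and F :: "nat \<Rightarrow> ('v list \<Rightarrow> ('u::{finite,ab_group_add}) list) pmf"
    and q :: "nat \<Rightarrow> 'v list \<Rightarrow> 'u list \<Rightarrow> 'x list"
    and m l :: "nat \<Rightarrow> nat"
    and \<gamma> :: "nat \<Rightarrow> real"
    and R \<epsilon> :: real
  assumes source: "\<And>n. n \<ge> 1 \<Longrightarrow> set_pmf (V n) \<subseteq> seqs n"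
    and channel: "\<And>k x. x \<in> seqs k \<Longrightarrow> set_pmf (W k x) \<subseteq> seqs k"
    and R_nonneg: "R \<ge> 0" and eps_nonneg: "\<epsilon> \<ge> 0"
    and m_pos: "\<And>n. n \<ge> 1 \<Longrightarrow> m n > 0"
    and l_pos: "\<And>n. n \<ge> 1 \<Longrightarrow> l n > 0"
    and F_lin: "\<And>n. n \<ge> 1 \<Longrightarrow> random_linear_code n (l n) (F n)"
    and q_maps: "\<And>n v u. n \<ge> 1 \<Longrightarrow> v \<in> seqs n \<Longrightarrow> u \<in> seqs (l n) \<Longrightarrow> q n v u \<in> seqs (m n)"
    and gamma_pos: "\<And>n. n \<ge> 1 \<Longrightarrow> \<gamma> n > 0"
    and gamma_lim: "\<gamma> \<longlonglongrightarrow> 0"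
    and n_gamma: "filterlim (\<lambda>n. real n * \<gamma> n) at_top sequentially"
    and rate: "limsup (\<lambda>n. ereal (real n / real (m n))) \<le> ereal R"
    and cond: "limsup (\<lambda>n. ereal (measure_pmf.prob (joint (V n) (l n) (q n) (W (m n)))
                 {(v, x, y).
                    1 / real n * ln (pmf (W (m n) x) y /
                        pmf (map_pmf (\<lambda>(v, x, y). y) (joint (V n) (l n) (q n) (W (m n)))) y)
                    \<le> 1 / real n * ln (1 / pmf (V n) v)
                      + 1 / real n * ln (beta' n (l n) (F n) (q n) v x) + \<gamma> n}))
             \<le> ereal \<epsilon>"
  shows "limsup (\<lambda>n. ereal (avg_error n (l n) (V n) (W (m n)) (F n) (q n))) \<le> ereal \<epsilon>"
proof -
  have per: "avg_error n (l n) (V n) (W (m n)) (F n) (q n)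
     \<le> measure_pmf.prob (joint (V n) (l n) (q n) (W (m n)))
                 {(v, x, y).
                    1 / real n * ln (pmf (W (m n) x) y /
                        pmf (map_pmf (\<lambda>(v, x, y). y) (joint (V n) (l n) (q n) (W (m n)))) y)
                    \<le> 1 / real n * ln (1 / pmf (V n) v)
                      + 1 / real n * ln (beta' n (l n) (F n) (q n) v x) + \<gamma> n}
        + exp (- (real n * \<gamma> n))" if n: "n \<ge> 1" for n
  proof -
    interpret s: sys n "l n" "V n" "W (m n)" "F n" "q n" "\<gamma> n"
      by unfold_locales (use n source l_pos F_lin in auto)
    show ?thesis using s.per_n unfolding s.J_def s.A_def .
  qed
  define b where "b = (\<lambda>n. measure_pmf.prob (joint (V n) (l n) (q n) (W (m n)))
                 {(v, x, y).
                    1 / real n * ln (pmf (W (m n) x) y /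
                        pmf (map_pmf (\<lambda>(v, x, y). y) (joint (V n) (l n) (q n) (W (m n)))) y)
                    \<le> 1 / real n * ln (1 / pmf (V n) v)
                      + 1 / real n * ln (beta' n (l n) (F n) (q n) v x) + \<gamma> n})"
  define c where "c = (\<lambda>n. exp (- (real n * \<gamma> n)))"
  have ev: "eventually (\<lambda>n. ereal (avg_error n (l n) (V n) (W (m n)) (F n) (q n)) \<le> ereal (b n) + ereal (c n)) sequentially"
    by (rule eventually_sequentiallyI[of 1]) (use per in \<open>simp add: b_def c_def\<close>)
  have c0: "(c \<longlongrightarrow> 0) sequentially"
  proof -
    have "filterlim (\<lambda>n. - (real n * \<gamma> n)) at_bot sequentially"
      by (rule filterlim_compose[OF filterlim_uminus_at_bot_at_top n_gamma])
    then show ?thesis unfolding c_def by (rule filterlim_compose[OF exp_at_bot])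
  qed
  have lc: "limsup (\<lambda>n. ereal (c n)) = 0"
  proof -
    have "((\<lambda>n. ereal (c n)) \<longlongrightarrow> ereal 0) sequentially" using c0 by (rule tendsto_ereal)
    then have "limsup (\<lambda>n. ereal (c n)) = ereal 0" by (intro lim_imp_Limsup) simp_all
    then show ?thesis by (simp add: zero_ereal_def)
  qed
  have "limsup (\<lambda>n. ereal (avg_error n (l n) (V n) (W (m n)) (F n) (q n))) \<le> limsup (\<lambda>n. ereal (b n) + ereal (c n))"
    by (rule Limsup_mono[OF ev])
  also have "\<dots> \<le> limsup (\<lambda>n. ereal (b n)) + limsup (\<lambda>n. ereal (c n))"
    by (rule ereal_limsup_add_mono)
  also have "\<dots> = limsup (\<lambda>n. ereal (b n))" unfolding lc by simp
  also have "\<dots> \<le> ereal \<epsilon>" using cond unfolding b_def .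
  finally show ?thesis .
qed

end
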